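(* Let $k$ be a field and $Q,q\in k^\times$ with $f_d(Q,q)=\prod_{i=1-d}^{d-1}(Q^{-2}+q^{2i})\neq0$. Then the functors $\otimes^d_+$ and $\otimes^d_-$ are direct summands of $\otimes^d$; i.e. for each $n$, $\otimes^d_\pm(V_n)$ is a direct summand of $V_n^{\otimes d}$, compatibly with all morphisms $\mathrm{Hom}_{\mathcal H^B_{Q,q}(d)}(V_n^{\otimes d},V_m^{\otimes d})$.
   Context: $\mathcal H^B_{Q,q}(d)$ is generated by $T_0,\dots,T_{d-1}$ with relations $(T_0+Q)(T_0-Q^{-1})=0$; $(T_i+q)(T_i-q^{-1})=0$ ($i>0$); $T_iT_{i+1}T_i=T_{i+1}T_iT_{i+1}$ ($i>0$); $T_0T_1T_0T_1=T_1T_0T_1T_0$; $T_iT_j=T_jT_i$ ($|i-j|>1$); $K_i=T_{i-1}\cdots T_1T_0T_1\cdots T_{i-1}$ ($1\le i\le d$), which pairwise commute. $V_n$ has basis $v_i$, $i\in\mathbb I_n$ ($\mathbb I_{2s}=\{-\tfrac{2s-1}{2},\dots,\tfrac{2s-1}{2}\}$ half-integers, $\mathbb I_{2s+1}=\{-s,\dots,s\}$); $\mathcal H^B_{Q,q}(d)$ acts on $V_n^{\otimes d}$ from the right with $T_i$ ($i>0$) acting on factors $i,i+1$ by $R_q$: $v_i\otimes v_j\mapsto q^{-1}v_i\otimes v_j$ ($i=j$), $v_j\otimes v_i$ ($i<j$), $v_j\otimes v_i+(q^{-1}-q)v_i\otimes v_j$ ($i>j$), and $T_0$ acting on the first factor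 by $K_Q$: $v_i\mapsto Q^{-1}v_i$ ($i=0$), $v_{-i}$ ($i>0$), $v_{-i}+(Q^{-1}-Q)v_i$ ($i<0$). Every eigenvalue of $K_i$ on $V_n^{\otimes d}$ has the form $Q^{-1}q^{2j}$ or $-Qq^{2j}$ with $|j|<i$, and under $f_d(Q,q)\ne0$ these two sets of values are disjoint. $\otimes^d$ is the polynomial functor $V_n\mapsto V_n^{\otimes d}$ (a functor on the category with objects $V_n$ and morphisms $\mathrm{Hom}_{\mathcal H^B_{Q,q}(d)}(V_n^{\otimes d},V_m^{\otimes d})$). $\otimes^d_+$ is the largest quotient of $\otimes^d$ on which each $K_i$ has only eigenvalues of the form $Q^{-1}q^{2j}$; $\otimes^d_-$ is the largest subfunctor of $\otimes^d$ on which each $K_i$ has only eigenvalues of the form $-Qq^{2j}$. *)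

theory Defs
  imports Main
begin

(* Index set I_n, doubled: a in I_n  <-> 2a in Jn n.  This is order preserving,
   sends 0 to 0 and commutes with negation. *)
definition Jn :: "nat \<Rightarrow> int set" where
  "Jn n = {a. \<bar>a\<bar> \<le> int n - 1 \<and> even (a + int n - 1)}"

(* basis words of V_n^{\<otimes> d}: v_{w!0} \<otimes> ... \<otimes> v_{w!(d-1)} *)
definition W :: "nat \<Rightarrow> nat \<Rightarrow> int list set" where
  "W n d = {w. length w = d \<and> set w \<subseteq> Jn n}"

(* V_n^{\<otimes> d} as coefficient functions supported on basis words *)
definition Tens :: "nat \<Rightarrow> nat \<Rightarrow> (int list \<Rightarrow> 'k::field) set" where
  "Tens n d = {f. \<forall>w. w \<notin> W n d \<longrightarrow> f w = 0}"

(* coefficient of basis vector u in (basis vector w) \<cdot> T_i *)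
definition coef :: "'k::field \<Rightarrow> 'k \<Rightarrow> nat \<Rightarrow> int list \<Rightarrow> int list \<Rightarrow> 'k" where
  "coef Q q i w u =
    (if i = 0 then
       (let a = w ! 0; s = w[0 := - a] in
        if a = 0 then (if u = w then inverse Q else 0)
        else if a > 0 then (if u = s then 1 else 0)
        else (if u = s then 1 else 0) + (if u = w then inverse Q - Q else 0))
     else
       (let a = w ! (i - 1); b = w ! i; s = w[i - 1 := b, i := a] in
        if a = b then (if u = w then inverse q else 0)
        else if a < b then (if u = s then 1 else 0)
        else (if u = s then 1 else 0) + (if u = w then inverse q - q else 0)))"

(* right action f \<mapsto> f \<cdot> T_i on V_n^{\<otimes> d} *)
definition act :: "'k::field \<Rightarrow> 'k \<Rightarrow> nat \<Rightarrow> nat \<Rightarrow> nat \<Rightarrow> (int list \<Rightarrow> 'k) \<Rightarrow> (int list \<Rightarrow> 'k)" where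
  "act Q q n d i f = (\<lambda>u. \<Sum>w\<in>W n d. f w * coef Q q i w u)"

(* K_i = T_{i-1} ... T_1 T_0 T_1 ... T_{i-1}, acting from the right *)
definition Kact :: "'k::field \<Rightarrow> 'k \<Rightarrow> nat \<Rightarrow> nat \<Rightarrow> nat \<Rightarrow> (int list \<Rightarrow> 'k) \<Rightarrow> (int list \<Rightarrow> 'k)" where
  "Kact Q q n d i f = fold (\<lambda>j g. act Q q n d j g) (rev [1..<i] @ 0 # [1..<i]) f"

definition HomH :: "'k::field \<Rightarrow> 'k \<Rightarrow> nat \<Rightarrow> nat \<Rightarrow> nat
    \<Rightarrow> ((int list \<Rightarrow> 'k) \<Rightarrow> (int list \<Rightarrow> 'k)) set" where
  "HomH Q q d n m = {\<phi>.
     (\<forall>f\<in>Tens n d. \<phi> f \<in> Tens m d) \<and>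
     (\<forall>f\<in>Tens n d. \<forall>g\<in>Tens n d. \<phi> (\<lambda>w. f w + g w) = (\<lambda>w. \<phi> f w + \<phi> g w)) \<and>
     (\<forall>c. \<forall>f\<in>Tens n d. \<phi> (\<lambda>w. c * f w) = (\<lambda>w. c * \<phi> f w)) \<and>
     (\<forall>j<d. \<forall>f\<in>Tens n d. \<phi> (act Q q n d j f) = act Q q m d j (\<phi> f))}"

definition submodule :: "'k::field \<Rightarrow> 'k \<Rightarrow> nat \<Rightarrow> nat \<Rightarrow> (int list \<Rightarrow> 'k) set \<Rightarrow> bool" where
  "submodule Q q d n S \<longleftrightarrow>
     S \<subseteq> Tens n d \<and> (\<lambda>w. 0) \<in> S \<and>
     (\<forall>f\<in>S. \<forall>g\<in>S. (\<lambda>w. f w + g w) \<in> S) \<and>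
     (\<forall>c. \<forall>f\<in>S. (\<lambda>w. c * f w) \<in> S) \<and>
     (\<forall>j<d. \<forall>f\<in>S. act Q q n d j f \<in> S)"

definition subfunctor :: "'k::field \<Rightarrow> 'k \<Rightarrow> nat \<Rightarrow> (nat \<Rightarrow> (int list \<Rightarrow> 'k) set) \<Rightarrow> bool" where
  "subfunctor Q q d S \<longleftrightarrow>
     (\<forall>n. submodule Q q d n (S n)) \<and>
     (\<forall>n m. \<forall>\<phi>\<in>HomH Q q d n m. \<phi> ` S n \<subseteq> S m)"

definition plus_eig :: "'k::field \<Rightarrow> 'k \<Rightarrow> nat \<Rightarrow> 'k set" where
  "plus_eig Q q i = {inverse Q * q powi (2 * j) | j::int. \<bar>j\<bar> < int i}"

definition minus_eig :: "'k::field \<Rightarrow> 'k \<Rightarrow> nat \<Rightarrow> 'k set" where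
  "minus_eig Q q i = {- Q * q powi (2 * j) | j::int. \<bar>j\<bar> < int i}"

definition sub_eigs_in :: "'k::field \<Rightarrow> 'k \<Rightarrow> nat \<Rightarrow> nat \<Rightarrow> (int list \<Rightarrow> 'k) set \<Rightarrow> nat \<Rightarrow> 'k set \<Rightarrow> bool" where
  "sub_eigs_in Q q d n S i A \<longleftrightarrow>
     (\<forall>f\<in>S. \<forall>e. f \<noteq> (\<lambda>w. 0) \<and> Kact Q q n d i f = (\<lambda>w. e * f w) \<longrightarrow> e \<in> A)"

(* every eigenvalue of K_i on the quotient V_n^{\<otimes> d} / U lies in A *)
definition quot_eigs_in :: "'k::field \<Rightarrow> 'k \<Rightarrow> nat \<Rightarrow> nat \<Rightarrow> (int list \<Rightarrow> 'k) set \<Rightarrow> nat \<Rightarrow> 'k set \<Rightarrow> bool" where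
  "quot_eigs_in Q q d n U i A \<longleftrightarrow>
     (\<forall>f\<in>Tens n d. \<forall>e. f \<notin> U \<and> (\<lambda>w. Kact Q q n d i f w - e * f w) \<in> U \<longrightarrow> e \<in> A)"

(* S = \<otimes>^d_- : the largest subfunctor on which every K_i has only eigenvalues -Q q^{2j} *)
definition minus_prop :: "'k::field \<Rightarrow> 'k \<Rightarrow> nat \<Rightarrow> (nat \<Rightarrow> (int list \<Rightarrow> 'k) set) \<Rightarrow> bool" where
  "minus_prop Q q d S \<longleftrightarrow> subfunctor Q q d S \<and>
     (\<forall>n. \<forall>i\<in>{1..d}. sub_eigs_in Q q d n (S n) i (minus_eig Q q i))"

definition is_tensor_minus :: "'k::field \<Rightarrow> 'k \<Rightarrow> nat \<Rightarrow> (nat \<Rightarrow> (int list \<Rightarrow> 'k) set) \<Rightarrow> bool" where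
  "is_tensor_minus Q q d S \<longleftrightarrow> minus_prop Q q d S \<and>
     (\<forall>S'. minus_prop Q q d S' \<longrightarrow> (\<forall>n. S' n \<subseteq> S n))"

(* \<otimes>^d_+ = \<otimes>^d / U where U is the smallest subfunctor such that every K_i has
   only eigenvalues Q^{-1} q^{2j} on the quotient (i.e. the largest such quotient) *)
definition plus_prop :: "'k::field \<Rightarrow> 'k \<Rightarrow> nat \<Rightarrow> (nat \<Rightarrow> (int list \<Rightarrow> 'k) set) \<Rightarrow> bool" where
  "plus_prop Q q d U \<longleftrightarrow> subfunctor Q q d U \<and>
     (\<forall>n. \<forall>i\<in>{1..d}. quot_eigs_in Q q d n (U n) i (plus_eig Q q i))"

definition is_tensor_plus_kernel :: "'k::field \<Rightarrow> 'k \<Rightarrow> nat \<Rightarrow> (nat \<Rightarrow> (int list \<Rightarrow> 'k) set) \<Rightarrow> bool" where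
  "is_tensor_plus_kernel Q q d U \<longleftrightarrow> plus_prop Q q d U \<and>
     (\<forall>U'. plus_prop Q q d U' \<longrightarrow> (\<forall>n. U n \<subseteq> U' n))"

definition natural_idempotent :: "'k::field \<Rightarrow> 'k \<Rightarrow> nat
    \<Rightarrow> (nat \<Rightarrow> (int list \<Rightarrow> 'k) \<Rightarrow> (int list \<Rightarrow> 'k)) \<Rightarrow> bool" where
  "natural_idempotent Q q d p \<longleftrightarrow>
     (\<forall>n. p n \<in> HomH Q q d n n \<and> (\<forall>f\<in>Tens n d. p n (p n f) = p n f)) \<and>
     (\<forall>n m. \<forall>\<phi>\<in>HomH Q q d n m. \<forall>f\<in>Tens n d. \<phi> (p n f) = p m (\<phi> f))"

definition summand_sub :: "'k::field \<Rightarrow> 'k \<Rightarrow> nat \<Rightarrow> (nat \<Rightarrow> (int list \<Rightarrow> 'k) set) \<Rightarrow> bool" where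
  "summand_sub Q q d S \<longleftrightarrow>
     (\<exists>p. natural_idempotent Q q d p \<and> (\<forall>n. p n ` Tens n d = S n))"

(* quotient functor \<otimes>^d / U is a direct summand of \<otimes>^d (the quotient map splits naturally) *)
definition summand_quot :: "'k::field \<Rightarrow> 'k \<Rightarrow> nat \<Rightarrow> (nat \<Rightarrow> (int list \<Rightarrow> 'k) set) \<Rightarrow> bool" where
  "summand_quot Q q d U \<longleftrightarrow>
     (\<exists>p. natural_idempotent Q q d p \<and> (\<forall>n. {f\<in>Tens n d. p n f = (\<lambda>w. 0)} = U n))"

definition f_d :: "nat \<Rightarrow> 'k::field \<Rightarrow> 'k \<Rightarrow> 'k" where
  "f_d d Q q = (\<Prod>i\<in>{1 - int d..int d - 1}. Q powi (-2) + q powi (2 * i))"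

end

theory Submission
  imports Defs "HOL-Computational_Algebra.Polynomial"
begin

definition linop :: "((int list \<Rightarrow> 'k::field) \<Rightarrow> (int list \<Rightarrow> 'k)) \<Rightarrow> bool" where
  "linop A \<longleftrightarrow> (\<forall>f g. A (\<lambda>w. f w + g w) = (\<lambda>w. A f w + A g w)) \<and>
                (\<forall>c f. A (\<lambda>w. c * f w) = (\<lambda>w. c * A f w))"

typedef (overloaded) ('k::field) lop = "{A :: (int list \<Rightarrow> 'k) \<Rightarrow> (int list \<Rightarrow> 'k). linop A}"
  morphisms app Abs_lop
  by (rule exI[of _ "\<lambda>f. f"]) (simp add: linop_def)

setup_lifting type_definition_lop

lemma linop_add: "linop A \<Longrightarrow> A (\<lambda>w. f w + g w) = (\<lambda>w. A f w + A g w)"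
  by (simp add: linop_def)
lemma linop_smult: "linop A \<Longrightarrow> A (\<lambda>w. c * f w) = (\<lambda>w. c * A f w)"
  by (simp add: linop_def)

lemma linop_zero: "linop A \<Longrightarrow> A (\<lambda>w. 0) = (\<lambda>w. 0)"
  using linop_smult[of A 0 "\<lambda>w. 0"] by simp

lemma linop_neg: "linop A \<Longrightarrow> A (\<lambda>w. - f w) = (\<lambda>w. - A f w)"
  using linop_smult[of A "-1" f] by simp

lemma linop_diff: "linop A \<Longrightarrow> A (\<lambda>w. f w - g w) = (\<lambda>w. A f w - A g w)"
proof -
  assume a: "linop A"
  have "A (\<lambda>w. f w - g w) = A (\<lambda>w. f w + (- g w))" by simp
  also have "\<dots> = (\<lambda>w. A f w + A (\<lambda>w. - g w) w)" using linop_add[OF a, of f "\<lambda>w. - g w"] by simp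
  also have "\<dots> = (\<lambda>w. A f w - A g w)" using linop_neg[OF a, of g] by simp
  finally show ?thesis .
qed

instantiation lop :: (field) ring_1
begin
lift_definition zero_lop :: "'a lop" is "\<lambda>f w. 0" by (simp add: linop_def)
lift_definition one_lop :: "'a lop" is "\<lambda>f. f" by (simp add: linop_def)
lift_definition plus_lop :: "'a lop \<Rightarrow> 'a lop \<Rightarrow> 'a lop" is "\<lambda>A B f w. A f w + B f w"
  by (simp add: linop_def algebra_simps)
lift_definition uminus_lop :: "'a lop \<Rightarrow> 'a lop" is "\<lambda>A f w. - A f w"
  by (simp add: linop_def algebra_simps)
lift_definition minus_lop :: "'a lop \<Rightarrow> 'a lop \<Rightarrow> 'a lop" is "\<lambda>A B f w. A f w - B f w"
  by (simp add: linop_def algebra_simps)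
lift_definition times_lop :: "'a lop \<Rightarrow> 'a lop \<Rightarrow> 'a lop" is "\<lambda>A B f. B (A f)"
  by (simp add: linop_def)
instance
proof
  fix a b c :: "'a lop"
  show "a * b * c = a * (b * c)" by transfer simp
  show "a + b + c = a + (b + c)" by transfer (simp add: algebra_simps)
  show "a + b = b + a" by transfer (simp add: algebra_simps)
  show "0 + a = a" by transfer simp
  show "- a + a = 0" by transfer simp
  show "a - b = a + - b" by transfer simp
  show "(a + b) * c = a * c + b * c" by transfer (simp add: linop_add)
  show "a * (b + c) = a * b + a * c" by transfer simp
  show "1 * a = a" by transfer simp
  show "a * 1 = a" by transfer simp
  show "(0::'a lop) \<noteq> 1"
  proof transfer
    show "(\<lambda>f w. 0::'a) \<noteq> (\<lambda>f. f)"
      by (metis one_neq_zero)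
  qed
qed
end

lemma app_plus: "app (A + B) f = (\<lambda>w. app A f w + app B f w)" by transfer simp
lemma app_minus: "app (A - B) f = (\<lambda>w. app A f w - app B f w)" by transfer simp
lemma app_uminus: "app (- A) f = (\<lambda>w. - app A f w)" by transfer simp
lemma app_times: "app (A * B) f = app B (app A f)" by transfer simp
lemma app_one: "app 1 f = f" by transfer simp
lemma app_zero: "app 0 f = (\<lambda>w. 0)" by transfer simp
lemma app_linop: "linop (app A)" using app by simp
lemma app_add: "app A (\<lambda>w. f w + g w) = (\<lambda>w. app A f w + app A g w)"
  by (rule linop_add[OF app_linop])
lemma app_smult: "app A (\<lambda>w. c * f w) = (\<lambda>w. c * app A f w)"
  by (rule linop_smult[OF app_linop])
lemma app_fzero: "app A (\<lambda>w. 0) = (\<lambda>w. 0)"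
  by (rule linop_zero[OF app_linop])
lemma app_diff: "app A (\<lambda>w. f w - g w) = (\<lambda>w. app A f w - app A g w)"
  by (rule linop_diff[OF app_linop])

lift_definition sc :: "'k::field \<Rightarrow> 'k lop" is "\<lambda>c f w. c * f w"
  by (simp add: linop_def algebra_simps)

lemma app_sc: "app (sc c) f = (\<lambda>w. c * f w)" by transfer simp
lemma sc_add: "sc (a + b) = sc a + sc b" by transfer (simp add: algebra_simps)
lemma sc_mult: "sc (a * b) = sc a * sc b" by transfer (simp add: algebra_simps)
lemma sc_one: "sc 1 = 1" by transfer simp
lemma sc_zero: "sc 0 = 0" by transfer simp
lemma sc_minus: "sc (- a) = - sc a" by transfer simp
lemma sc_diff: "sc (a - b) = sc a - sc b" by transfer (simp add: algebra_simps)
lemma sc_comm: "sc c * A = A * sc c" by transfer (simp add: linop_smult)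

definition sw :: "nat \<Rightarrow> int list \<Rightarrow> int list" where
  "sw i u = (if i = 0 then u[0 := - (u!0)] else u[i-1 := u!i, i := u!(i-1)])"

definition tgf :: "'k::field \<Rightarrow> 'k \<Rightarrow> nat \<Rightarrow> nat \<Rightarrow> (int list \<Rightarrow> 'k) \<Rightarrow> (int list \<Rightarrow> 'k)" where
  "tgf Q q d i f u = (if length u = d \<and> i < d then
     (if i = 0 then (if u!0 = 0 then inverse Q * f u
                     else (if u!0 < 0 then (inverse Q - Q) * f u else 0) + f (sw 0 u))
      else (if u!(i-1) = u!i then inverse q * f u
            else (if u!(i-1) > u!i then (inverse q - q) * f u else 0) + f (sw i u)))
   else (if i = 0 then inverse Q else inverse q) * f u)"

lemma tgf_linop: "linop (tgf Q q d i)"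
  unfolding linop_def
proof (intro conjI allI)
  fix f g :: "int list \<Rightarrow> 'a" and c :: 'a
  show "tgf Q q d i (\<lambda>w. f w + g w) = (\<lambda>w. tgf Q q d i f w + tgf Q q d i g w)"
    unfolding tgf_def by (rule ext) (simp add: algebra_simps)
  show "tgf Q q d i (\<lambda>w. c * f w) = (\<lambda>w. c * tgf Q q d i f w)"
    unfolding tgf_def by (rule ext) (simp add: algebra_simps)
qed

lift_definition tg :: "'k::field \<Rightarrow> 'k \<Rightarrow> nat \<Rightarrow> nat \<Rightarrow> 'k lop" is tgf
  by (rule tgf_linop)

lemma length_sw[simp]: "length (sw i u) = length u"
  by (simp add: sw_def)

lemma sw0_nth: "0 < length u \<Longrightarrow> sw 0 u ! k = (if k = 0 then - (u!0) else u!k)"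
  by (simp add: sw_def nth_list_update)

lemma swS_nth: "Suc i < length u \<Longrightarrow> sw (Suc i) u ! k = (if k = i then u ! Suc i else if k = Suc i then u ! i else u ! k)"
  by (simp add: sw_def nth_list_update)

lemma sw_sw[simp]: "i < length u \<Longrightarrow> sw i (sw i u) = u"
proof (cases i)
  case 0
  assume "i < length u"
  then show ?thesis using 0 by (simp add: sw_def)
next
  case (Suc k)
  assume "i < length u"
  then have l: "Suc k < length u" using Suc by simp
  show ?thesis
  proof (rule nth_equalityI)
    show "length (sw i (sw i u)) = length u" by simp
    fix j assume "j < length (sw i (sw i u))"
    then show "sw i (sw i u) ! j = u ! j"
      using l by (simp add: Suc swS_nth)
  qed
qed

lemma app_tg: "app (tg Q q d i) = tgf Q q d i"
  by transfer simp

lemma lop_eqI: "(\<And>f u. app A f u = app B f u) \<Longrightarrow> A = B"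
  by (metis app_inject ext)

lemma tgf_out: "\<not> (length u = d \<and> i < d) \<Longrightarrow> tgf Q q d i f u = (if i = 0 then inverse Q else inverse q) * f u"
  unfolding tgf_def by (rule if_not_P)
lemma tgf_0: "length u = d \<Longrightarrow> 0 < d \<Longrightarrow> tgf Q q d 0 f u =
   (if u!0 = 0 then inverse Q * f u else (if u!0 < 0 then (inverse Q - Q) * f u else 0) + f (sw 0 u))"
  by (simp add: tgf_def)
lemma tgf_S: "length u = d \<Longrightarrow> Suc i < d \<Longrightarrow> tgf Q q d (Suc i) f u =
   (if u!i = u!Suc i then inverse q * f u else (if u!i > u!Suc i then (inverse q - q) * f u else 0) + f (sw (Suc i) u))"
  by (simp add: tgf_def)

lemma tg0_quad:
  assumes "Q \<noteq> 0"
  shows "tg Q q d 0 * tg Q q d 0 = sc (inverse Q - Q) * tg Q q d 0 + 1"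
proof (rule lop_eqI)
  fix f u
  show "app (tg Q q d 0 * tg Q q d 0) f u = app (sc (inverse Q - Q) * tg Q q d 0 + 1) f u"
  proof (cases "length u = d \<and> 0 < d")
    case True
    then have l: "0 < length u" by simp
    show ?thesis using True l assms
      by (simp add: app_times app_plus app_sc app_one app_tg tgf_0 sw0_nth algebra_simps)
  next
    case False
    then show ?thesis using False assms
      by (simp add: app_times app_plus app_sc app_one app_tg tgf_out field_simps)
  qed
qed

lemma tgS_quad:
  assumes "q \<noteq> 0"
  shows "tg Q q d (Suc i) * tg Q q d (Suc i) = sc (inverse q - q) * tg Q q d (Suc i) + 1"
proof (rule lop_eqI)
  fix f u
  show "app (tg Q q d (Suc i) * tg Q q d (Suc i)) f u = app (sc (inverse q - q) * tg Q q d (Suc i) + 1) f u"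
  proof (cases "length u = d \<and> Suc i < d")
    case True
    then have l: "Suc i < length u" by simp
    show ?thesis using True l assms
      by (simp add: app_times app_plus app_sc app_one app_tg tgf_S swS_nth algebra_simps)
  next
    case False
    then show ?thesis using False assms
      by (simp add: app_times app_plus app_sc app_one app_tg tgf_out field_simps)
  qed
qed

lemma sw_braid: "Suc (Suc k) < length u \<Longrightarrow>
  sw (Suc k) (sw (Suc (Suc k)) (sw (Suc k) u)) = sw (Suc (Suc k)) (sw (Suc k) (sw (Suc (Suc k)) u))"
  by (rule nth_equalityI) (auto simp: swS_nth)

lemma tg_braid:
  assumes "q \<noteq> 0" "Suc (Suc k) < d"
  shows "tg Q q d (Suc k) * tg Q q d (Suc (Suc k)) * tg Q q d (Suc k) =
         tg Q q d (Suc (Suc k)) * tg Q q d (Suc k) * tg Q q d (Suc (Suc k))"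
proof (rule lop_eqI)
  fix f u
  show "app (tg Q q d (Suc k) * tg Q q d (Suc (Suc k)) * tg Q q d (Suc k)) f u =
        app (tg Q q d (Suc (Suc k)) * tg Q q d (Suc k) * tg Q q d (Suc (Suc k))) f u"
  proof (cases "length u = d")
    case True
    then have l: "Suc (Suc k) < length u" using assms by simp
    obtain x y z where xyz: "u!k = x" "u!Suc k = y" "u!Suc (Suc k) = z" by blast
    show ?thesis using True l assms xyz
      by (cases x y rule: linorder_cases; cases y z rule: linorder_cases; cases x z rule: linorder_cases)
         (simp_all add: app_times app_tg tgf_S swS_nth sw_braid algebra_simps, simp_all add: field_simps)
  next
    case False
    then show ?thesis using assms
      by (simp add: app_times app_tg tgf_out)
  qed
qed

lemma sw_typeB: "Suc 0 < length u \<Longrightarrow>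
  sw 0 (sw (Suc 0) (sw 0 (sw (Suc 0) u))) = sw (Suc 0) (sw 0 (sw (Suc 0) (sw 0 u)))"
proof -
  assume a: "Suc 0 < length u"
  then have "0 < length u" "u \<noteq> []" by auto
  then show ?thesis using a by (intro nth_equalityI) (auto simp: swS_nth sw0_nth)
qed

lemma tg_typeB:
  assumes "q \<noteq> 0" "Q \<noteq> 0" "Suc 0 < d"
  shows "tg Q q d 0 * tg Q q d (Suc 0) * tg Q q d 0 * tg Q q d (Suc 0) =
         tg Q q d (Suc 0) * tg Q q d 0 * tg Q q d (Suc 0) * tg Q q d 0"
proof (rule lop_eqI)
  fix f u
  show "app (tg Q q d 0 * tg Q q d (Suc 0) * tg Q q d 0 * tg Q q d (Suc 0)) f u =
        app (tg Q q d (Suc 0) * tg Q q d 0 * tg Q q d (Suc 0) * tg Q q d 0) f u"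
  proof (cases "length u = d")
    case True
    then have l: "Suc 0 < length u" "0 < length u" using assms by simp_all
    obtain x y where xy: "u!0 = x" "u!Suc 0 = y" by blast
    show ?thesis using True l assms xy
      by (cases x "0::int" rule: linorder_cases; cases y "0::int" rule: linorder_cases; cases x y rule: linorder_cases;
          cases x "-y" rule: linorder_cases)
         (simp_all add: app_times app_tg tgf_S tgf_0 swS_nth sw0_nth sw_typeB algebra_simps, simp_all add: field_simps)
  next
    case False
    then show ?thesis using assms
      by (simp add: app_times app_tg tgf_out)
  qed
qed

lemma sw_commS: "Suc i < j \<Longrightarrow> Suc j < length u \<Longrightarrow>
  sw (Suc j) (sw (Suc i) u) = sw (Suc i) (sw (Suc j) u)"
  by (intro nth_equalityI) (auto simp: swS_nth)

lemma sw_comm0: "0 < j \<Longrightarrow> Suc j < length u \<Longrightarrow>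
  sw (Suc j) (sw 0 u) = sw 0 (sw (Suc j) u)"
proof -
  assume a: "0 < j" "Suc j < length u"
  then have "0 < length u" "u \<noteq> []" by auto
  then show ?thesis using a by (intro nth_equalityI) (auto simp: swS_nth sw0_nth)
qed

lemma tg_commS:
  assumes "Suc i < j" "Suc j < d"
  shows "tg Q q d (Suc i) * tg Q q d (Suc j) = tg Q q d (Suc j) * tg Q q d (Suc i)"
proof (rule lop_eqI)
  fix f u
  show "app (tg Q q d (Suc i) * tg Q q d (Suc j)) f u = app (tg Q q d (Suc j) * tg Q q d (Suc i)) f u"
  proof (cases "length u = d")
    case True
    then have l: "Suc j < length u" "Suc i < length u" using assms by simp_all
    show ?thesis using True l assms
      by (auto simp: app_times app_tg tgf_S swS_nth sw_commS algebra_simps)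
  next
    case False
    then show ?thesis using assms
      by (simp add: app_times app_tg tgf_out)
  qed
qed

lemma tg_comm0:
  assumes "0 < j" "Suc j < d"
  shows "tg Q q d 0 * tg Q q d (Suc j) = tg Q q d (Suc j) * tg Q q d 0"
proof (rule lop_eqI)
  fix f u
  show "app (tg Q q d 0 * tg Q q d (Suc j)) f u = app (tg Q q d (Suc j) * tg Q q d 0) f u"
  proof (cases "length u = d")
    case True
    then have l: "Suc j < length u" "0 < length u" "u \<noteq> []" using assms by auto
    show ?thesis using True l assms
      by (auto simp: app_times app_tg tgf_S tgf_0 swS_nth sw0_nth sw_comm0 algebra_simps)
  next
    case False
    then show ?thesis using assms
      by (simp add: app_times app_tg tgf_out)
  qed
qed

lemma Jn_neg: "a \<in> Jn n \<Longrightarrow> - a \<in> Jn n"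
proof -
  assume "a \<in> Jn n"
  then have "\<bar>a\<bar> \<le> int n - 1" "even (a + int n - 1)" by (auto simp: Jn_def)
  moreover have "- a + int n - 1 = (a + int n - 1) - 2 * a" by simp
  ultimately show ?thesis by (auto simp: Jn_def)
qed

lemma sw_W_fwd: "i < d \<Longrightarrow> u \<in> W n d \<Longrightarrow> sw i u \<in> W n d"
proof -
  assume i: "i < d" and u: "u \<in> W n d"
  then have l: "length u = d" and s: "set u \<subseteq> Jn n" by (auto simp: W_def)
  have "\<forall>k < length u. sw i u ! k \<in> Jn n"
  proof (intro allI impI)
    fix k assume k: "k < length u"
    show "sw i u ! k \<in> Jn n"
    proof (cases i)
      case 0
      have a: "u ! k \<in> Jn n" using nth_mem[OF k] s by blast
    have l0: "0 < length u" using k by arith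
    then have b: "u ! 0 \<in> Jn n" using nth_mem[of 0 u] s by blast
    show ?thesis using a b k 0 by (simp add: sw0_nth[OF l0] Jn_neg)
    next
      case (Suc j)
      then show ?thesis using k s i l by (auto simp: swS_nth)
    qed
  qed
  then show ?thesis using l by (auto simp: W_def set_conv_nth)
qed

lemma sw_W: "i < d \<Longrightarrow> (sw i u \<in> W n d) = (u \<in> W n d)"
proof
  assume i: "i < d" and "sw i u \<in> W n d"
  then have "sw i (sw i u) \<in> W n d" by (rule sw_W_fwd)
  moreover have "length u = d" using \<open>sw i u \<in> W n d\<close> by (simp add: W_def)
  ultimately show "u \<in> W n d" using i by simp
next
  assume "i < d" "u \<in> W n d" then show "sw i u \<in> W n d" by (rule sw_W_fwd)
qed

definition diag :: "'k::field \<Rightarrow> 'k \<Rightarrow> nat \<Rightarrow> int list \<Rightarrow> 'k" where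
  "diag Q q i w = (if i = 0 then (if w!0 = 0 then inverse Q else if w!0 < 0 then inverse Q - Q else 0)
     else (if w!(i-1) = w!i then inverse q else if w!(i-1) > w!i then inverse q - q else 0))"

lemma sw_eq_iff: "i < length w \<Longrightarrow> (sw i w = w) = (if i = 0 then w!0 = 0 else w!(i-1) = w!i)"
proof (cases i)
  case 0
  assume "i < length w"
  then show ?thesis using 0 by (simp add: sw_def list_update_same_conv)
next
  case (Suc j)
  assume a: "i < length w"
  show ?thesis
  proof
    assume "sw i w = w"
    then have "sw i w ! j = w ! j" by simp
    then show "if i = 0 then w!0 = 0 else w!(i-1) = w!i" using a Suc by (simp add: swS_nth)
  next
    assume "if i = 0 then w!0 = 0 else w!(i-1) = w!i"
    then show "sw i w = w" using a Suc
      by (intro nth_equalityI) (auto simp: swS_nth)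
  qed
qed

lemma coef_char:
  assumes "i < length w"
  shows "coef Q q i w u = (if u = w then diag Q q i w else 0) + (if u = sw i w \<and> sw i w \<noteq> w then 1 else 0)"
proof (cases i)
  case 0
  have e: "(sw 0 w = w) = (w!0 = 0)" using sw_eq_iff[of 0 w] assms 0 by simp
  have s: "w[0 := - (w!0)] = sw 0 w" by (simp add: sw_def)
  show ?thesis unfolding 0 coef_def diag_def Let_def s
    using e by (cases "w!0 = 0"; cases "w!0 < 0") simp_all
next
  case (Suc j)
  have e: "(sw i w = w) = (w!j = w!Suc j)" using sw_eq_iff[of i w] assms Suc by simp
  have s: "w[j := w ! Suc j, Suc j := w ! j] = sw i w" by (simp add: sw_def Suc)
  show ?thesis unfolding Suc coef_def diag_def Let_def
    using e s Suc by (cases "w!j = w!Suc j"; cases "w!j < w!Suc j") simp_all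
qed

lemma finite_Jn: "finite (Jn n)"
proof -
  have "Jn n \<subseteq> {- int n .. int n}" by (auto simp: Jn_def)
  then show ?thesis by (rule finite_subset) simp
qed

lemma finite_W: "finite (W n d)"
proof -
  have "W n d = {xs. set xs \<subseteq> Jn n \<and> length xs = d}" by (auto simp: W_def)
  then show ?thesis using finite_lists_length_eq[OF finite_Jn] by simp
qed

lemma W_length: "w \<in> W n d \<Longrightarrow> length w = d" by (simp add: W_def)

lemma Tens_out: "f \<in> Tens n d \<Longrightarrow> w \<notin> W n d \<Longrightarrow> f w = 0" by (simp add: Tens_def)

lemma act_eq:
  assumes f: "f \<in> Tens n d" and i: "i < d"
  shows "act Q q n d i f = app (tg Q q d i) f"
proof (rule ext)
  fix u
  have c: "\<And>w. w \<in> W n d \<Longrightarrow> f w * coef Q q i w u =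
      (if w = u then f w * diag Q q i w else 0) + (if w = sw i u \<and> sw i u \<noteq> u then f w else 0)"
  proof -
    fix w assume w: "w \<in> W n d"
    then have lw: "i < length w" using i W_length by simp
    have e: "(u = sw i w \<and> sw i w \<noteq> w) = (w = sw i u \<and> sw i u \<noteq> u)"
    proof
      assume "u = sw i w \<and> sw i w \<noteq> w" then show "w = sw i u \<and> sw i u \<noteq> u" using lw by auto
    next
      assume a: "w = sw i u \<and> sw i u \<noteq> u"
      then have "i < length u" using lw by simp
      then show "u = sw i w \<and> sw i w \<noteq> w" using a by auto
    qed
    show "f w * coef Q q i w u =
      (if w = u then f w * diag Q q i w else 0) + (if w = sw i u \<and> sw i u \<noteq> u then f w else 0)"
      unfolding coef_char[OF lw] e
      by (cases "w = u"; cases "w = sw i u \<and> sw i u \<noteq> u") (auto simp: distrib_left)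
  qed
  have "act Q q n d i f u = (\<Sum>w\<in>W n d. (if w = u then f w * diag Q q i w else 0) + (if w = sw i u \<and> sw i u \<noteq> u then f w else 0))"
    unfolding act_def using c by (intro sum.cong) auto
  also have "\<dots> = (if u \<in> W n d then f u * diag Q q i u else 0) + (if sw i u \<in> W n d \<and> sw i u \<noteq> u then f (sw i u) else 0)"
  proof -
    have a: "(\<Sum>w\<in>W n d. (if w = u then f w * diag Q q i w else 0)) = (if u \<in> W n d then f u * diag Q q i u else 0)"
      by (rule sum.delta[OF finite_W])
    have b: "(\<Sum>w\<in>W n d. (if w = sw i u \<and> sw i u \<noteq> u then f w else 0)) =
       (if sw i u \<noteq> u then (\<Sum>w\<in>W n d. (if w = sw i u then f w else 0)) else 0)"
      by (cases "sw i u = u") simp_all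
    have c: "(\<Sum>w\<in>W n d. (if w = sw i u then f w else 0)) = (if sw i u \<in> W n d then f (sw i u) else 0)"
      by (rule sum.delta[OF finite_W])
    show ?thesis unfolding sum.distrib a b c by auto
  qed
  also have "\<dots> = app (tg Q q d i) f u"
  proof (cases "u \<in> W n d")
    case True
    then have l: "length u = d" "i < length u" using i by (auto simp: W_def)
    have sW: "sw i u \<in> W n d" using True sw_W[OF i] by simp
    show ?thesis
    proof (cases i)
      case 0
      have e: "(sw 0 u = u) = (u!0 = 0)" using sw_eq_iff[of 0 u] l 0 by simp
      show ?thesis using True sW l i e unfolding 0 by (simp add: app_tg tgf_0 diag_def)
    next
      case (Suc j)
      have e: "(sw i u = u) = (u!j = u!Suc j)" using sw_eq_iff[of i u] l Suc by simp
      show ?thesis using True sW l i e unfolding Suc by (simp add: app_tg tgf_S diag_def Suc)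
    qed
  next
    case False
    have sW: "sw i u \<notin> W n d" using False sw_W[OF i] by simp
    have fu: "f u = 0" "f (sw i u) = 0" using Tens_out[OF f] False sW by auto
    show ?thesis
    proof (cases "length u = d")
      case True
      then show ?thesis using False sW fu i
        by (cases i) (simp_all add: app_tg tgf_0 tgf_S)
    next
      case False
      then show ?thesis using fu by (simp add: app_tg tgf_out)
    qed
  qed
  finally show "act Q q n d i f u = app (tg Q q d i) f u" .
qed

lemma tg_Tens:
  assumes f: "f \<in> Tens n d" and i: "i < d"
  shows "app (tg Q q d i) f \<in> Tens n d"
  unfolding Tens_def
proof (intro CollectI allI impI)
  fix u assume False: "u \<notin> W n d"
  have sW: "sw i u \<notin> W n d" using False sw_W[OF i] by simp
  have fu: "f u = 0" "f (sw i u) = 0" using Tens_out[OF f] False sW by auto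
  show "app (tg Q q d i) f u = 0"
  proof (cases "length u = d")
    case True
    then show ?thesis using False sW fu i
      by (cases i) (simp_all add: app_tg tgf_0 tgf_S)
  next
    case False
    then show ?thesis using fu by (simp add: app_tg tgf_out)
  qed
qed

fun Kop :: "'k::field \<Rightarrow> 'k \<Rightarrow> nat \<Rightarrow> nat \<Rightarrow> 'k lop" where
  "Kop Q q d 0 = 1"
| "Kop Q q d (Suc i) = (if i = 0 then tg Q q d 0 else tg Q q d i * Kop Q q d i * tg Q q d i)"

lemma Kop_Tens: "f \<in> Tens n d \<Longrightarrow> i \<le> d \<Longrightarrow> app (Kop Q q d i) f \<in> Tens n d"
proof (induction i arbitrary: f)
  case 0
  then show ?case by (simp add: app_one)
next
  case (Suc i)
  show ?case
  proof (cases "i = 0")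
    case True
    then show ?thesis using Suc.prems by (simp add: tg_Tens)
  next
    case False
    have "i < d" using Suc.prems by simp
    then show ?thesis using Suc False by (simp add: app_times tg_Tens)
  qed
qed

lemma Kact_eq:
  assumes "f \<in> Tens n d" "1 \<le> i" "i \<le> d"
  shows "Kact Q q n d i f = app (Kop Q q d i) f"
proof -
  have "\<forall>f \<in> Tens n d. fold (\<lambda>j g. act Q q n d j g) (rev [1..<i] @ 0 # [1..<i]) f = app (Kop Q q d i) f"
    using assms(2,3)
  proof (induction i rule: nat_induct_at_least)
    case base
    then show ?case by (simp add: act_eq)
  next
    case (Suc i)
    have l: "rev [1..<Suc i] @ 0 # [1..<Suc i] = i # (rev [1..<i] @ 0 # [1..<i]) @ [i]"
      using Suc.hyps by simp
    show ?case
    proof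
      fix f :: "int list \<Rightarrow> 'a" assume f: "f \<in> Tens n d"
      have id: "i < d" using Suc by simp
      have t1: "act Q q n d i f \<in> Tens n d" using act_eq[OF f id] tg_Tens[OF f id] by simp
      have "fold (\<lambda>j g. act Q q n d j g) (rev [1..<i] @ 0 # [1..<i]) (act Q q n d i f) = app (Kop Q q d i) (act Q q n d i f)"
        using Suc.IH Suc.prems t1 by simp
      moreover have "app (Kop Q q d i) (act Q q n d i f) \<in> Tens n d"
        using Kop_Tens[OF t1] id by simp
      ultimately show "fold (\<lambda>j g. act Q q n d j g) (rev [1..<Suc i] @ 0 # [1..<Suc i]) f = app (Kop Q q d (Suc i)) f"
        unfolding l using Suc.hyps act_eq[OF f id] id by (simp add: app_times act_eq)
    qed
  qed
  then show ?thesis using assms(1) by (simp add: Kact_def)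
qed

definition peval :: "'k::field poly \<Rightarrow> 'k lop \<Rightarrow> 'k lop" where
  "peval p A = (\<Sum>k\<le>degree p. sc (coeff p k) * A ^ k)"

lemma peval_bound:
  assumes "degree p \<le> N"
  shows "peval p A = (\<Sum>k\<le>N. sc (coeff p k) * A ^ k)"
proof -
  have "(\<Sum>k\<le>N. sc (coeff p k) * A ^ k) = (\<Sum>k\<le>degree p. sc (coeff p k) * A ^ k)"
  proof (rule sum.mono_neutral_right)
    show "finite {..N}" by simp
    show "{..degree p} \<subseteq> {..N}" using assms by auto
    show "\<forall>i\<in>{..N} - {..degree p}. sc (coeff p i) * A ^ i = 0"
      by (auto simp: coeff_eq_0 sc_zero)
  qed
  then show ?thesis by (simp add: peval_def)
qed

lemma sc_comm_pow: "sc c * (A * B) = A * (sc c * B)"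
  by (metis mult.assoc sc_comm)

lemma peval_pCons: "peval (pCons a p) A = sc a + A * peval p A"
proof -
  have d: "degree (pCons a p) \<le> Suc (degree p)" by (simp add: degree_pCons_le)
  have "peval (pCons a p) A = (\<Sum>k\<le>Suc (degree p). sc (coeff (pCons a p) k) * A ^ k)"
    by (rule peval_bound[OF d])
  also have "\<dots> = sc a + (\<Sum>k\<le>degree p. sc (coeff p k) * A ^ Suc k)"
    by (subst sum.atMost_Suc_shift) simp
  also have "\<dots> = sc a + A * peval p A"
    by (simp add: peval_def sum_distrib_left sc_comm_pow power_Suc)
  finally show ?thesis .
qed

lemma peval_0[simp]: "peval 0 A = 0"
  by (simp add: peval_def sc_zero)

lemma peval_add: "peval (p + r) A = peval p A + peval r A"
proof (induction p arbitrary: r rule: pCons_induct)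
  case 0
  then show ?case by simp
next
  case (pCons a p)
  show ?case
  proof (cases r rule: pCons_cases)
    case (pCons b r')
    then show ?thesis using pCons.IH[of r'] by (simp add: peval_pCons sc_add distrib_left add_ac)
  qed
qed

lemma sc_sc_comm: "sc a * sc c = sc c * sc a"
  by (metis sc_mult mult.commute)

lemma peval_smult: "peval (smult c p) A = sc c * peval p A"
proof (induction p rule: pCons_induct)
  case 0
  then show ?case by simp
next
  case (pCons a p)
  then show ?case by (simp add: peval_pCons sc_mult algebra_simps sc_comm_pow sc_sc_comm)
qed

lemma peval_mult: "peval (p * r) A = peval p A * peval r A"
proof (induction p rule: pCons_induct)
  case 0
  then show ?case by simp
next
  case (pCons a p)
  have "pCons a p * r = smult a r + pCons 0 (p * r)" by simp
  then show ?case using pCons.IH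
    by (simp add: peval_add peval_smult peval_pCons sc_zero algebra_simps)
qed

lemma peval_const: "peval [:c:] A = sc c"
  by (simp add: peval_pCons)

lemma peval_one: "peval 1 A = 1"
  by (simp add: one_pCons peval_pCons sc_one)

lemma peval_lin: "peval [:- r, 1:] A = A - sc r"
  by (simp add: peval_pCons sc_one sc_minus)

lemma peval_comm: "B * A = A * B \<Longrightarrow> B * peval p A = peval p A * B"
proof (induction p rule: pCons_induct)
  case 0
  then show ?case by simp
next
  case (pCons a p)
  have "B * (sc a + A * peval p A) = B * sc a + (B * A) * peval p A"
    by (simp add: distrib_left mult.assoc)
  also have "\<dots> = sc a * B + A * (B * peval p A)"
    using pCons by (simp add: sc_comm mult.assoc)
  also have "\<dots> = sc a * B + A * (peval p A * B)"
    using pCons by simp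
  also have "\<dots> = (sc a + A * peval p A) * B"
    by (simp add: distrib_right mult.assoc)
  finally show ?case by (simp add: peval_pCons)
qed

lemma peval_comm2: "peval p A * peval r A = peval r A * peval p A"
  by (simp add: peval_mult[symmetric] mult.commute)

lemma peval_eig:
  assumes "app A v = (\<lambda>w. e * v w)"
  shows "app (peval p A) v = (\<lambda>w. poly p e * v w)"
proof (induction p rule: pCons_induct)
  case 0
  then show ?case by (simp add: app_zero)
next
  case (pCons a p)
  have "app (peval (pCons a p) A) v = (\<lambda>w. a * v w + app (peval p A) (app A v) w)"
    by (simp add: peval_pCons app_plus app_times app_sc)
  also have "\<dots> = (\<lambda>w. a * v w + e * (poly p e * v w))"
    using pCons by (simp add: assms app_smult)
  finally show ?case by (simp add: algebra_simps)
qed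

lemma pair_rel:
  fixes T X Y cc :: "'a::ring_1"
  assumes q: "T*T = cc*T + 1" and y: "Y = T*X*T" and xy: "X*Y = Y*X"
    and cT: "T*cc = cc*T" and cX: "X*cc = cc*X" and cY: "Y*cc = cc*Y"
  shows "T*X = Y*T - cc*Y" and "T*Y = X*T + cc*Y"
proof -
  have "Y*T = T*X*(T*T)" using y by (simp add: mult.assoc)
  also have "\<dots> = T*X*(cc*T) + T*X" using q by (simp add: distrib_left)
  also have "T*X*(cc*T) = cc*Y"
  proof -
    have "T*X*(cc*T) = T*(X*cc)*T" by (simp add: mult.assoc)
    also have "\<dots> = (T*cc)*X*T" using cX by (simp add: mult.assoc)
    also have "\<dots> = cc*Y" using cT y by (simp add: mult.assoc)
    finally show ?thesis .
  qed
  finally have "Y*T = cc*Y + T*X" .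
  then show "T*X = Y*T - cc*Y" by (simp add: algebra_simps)
  have "T*Y = (T*T)*X*T" using y by (simp add: mult.assoc)
  also have "\<dots> = cc*(T*X*T) + X*T" using q by (simp add: algebra_simps)
  finally show "T*Y = X*T + cc*Y" using y by (simp add: algebra_simps)
qed

lemma pair_sym:
  fixes T X Y cc :: "'a::ring_1"
  assumes q: "T*T = cc*T + 1" and y: "Y = T*X*T" and xy: "X*Y = Y*X"
    and cT: "T*cc = cc*T" and cX: "X*cc = cc*X" and cY: "Y*cc = cc*Y"
  shows "T*(X+Y) = (X+Y)*T" and "T*(X*Y) = (X*Y)*T"
proof -
  note r = pair_rel[OF assms]
  show "T*(X+Y) = (X+Y)*T" using r by (simp add: algebra_simps)
  have "T*(X*Y) = (T*X)*Y" by (simp add: mult.assoc)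
  also have "\<dots> = (Y*T - cc*Y)*Y" using r(1) by simp
  also have "\<dots> = Y*(T*Y) - cc*(Y*Y)" by (simp add: left_diff_distrib mult.assoc)
  also have "\<dots> = Y*X*T + Y*cc*Y - cc*(Y*Y)" using r(2) by (simp add: algebra_simps)
  also have "\<dots> = (X*Y)*T" using cY xy by (simp add: mult.assoc)
  finally show "T*(X*Y) = (X*Y)*T" .
qed

lemma phi_rel:
  fixes T X Y cc :: "'a::ring_1"
  assumes q: "T*T = cc*T + 1" and y: "Y = T*X*T" and xy: "X*Y = Y*X"
    and cT: "T*cc = cc*T" and cX: "X*cc = cc*X" and cY: "Y*cc = cc*Y"
  shows "(T*(X - Y) + cc*Y)*X = Y*(T*(X - Y) + cc*Y)"
    and "(T*(X - Y) + cc*Y)*Y = X*(T*(X - Y) + cc*Y)"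
    and "(T*(X - Y) + cc*Y)*(T*(X - Y) + cc*Y) = cc*cc*(X*Y) - (X - Y)*(X - Y)"
proof -
  note r = pair_rel[OF assms]
  have r1: "T*(X*Z) = Y*(T*Z) - cc*(Y*Z)" for Z using r(1) by (metis mult.assoc left_diff_distrib)
  have r2: "T*(Y*Z) = X*(T*Z) + cc*(Y*Z)" for Z using r(2) by (metis mult.assoc distrib_right)
  have q2: "T*(T*Z) = cc*(T*Z) + Z" for Z using q by (metis mult.assoc distrib_right mult_1_left)
  have c1: "T*(cc*Z) = cc*(T*Z)" for Z using cT by (metis mult.assoc)
  have c2: "X*(cc*Z) = cc*(X*Z)" for Z using cX by (metis mult.assoc)
  have c3: "Y*(cc*Z) = cc*(Y*Z)" for Z using cY by (metis mult.assoc)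
  have yx1: "Y*(X*Z) = X*(Y*Z)" for Z using xy by (metis mult.assoc)
  note rules = r1 r2 q2 c1 c2 c3 yx1 r(1) r(2) q cT cX cY xy[symmetric]
  show "(T*(X - Y) + cc*Y)*X = Y*(T*(X - Y) + cc*Y)"
    by (simp add: algebra_simps rules)
  show "(T*(X - Y) + cc*Y)*Y = X*(T*(X - Y) + cc*Y)"
    by (simp add: algebra_simps rules)
  show "(T*(X - Y) + cc*Y)*(T*(X - Y) + cc*Y) = cc*cc*(X*Y) - (X - Y)*(X - Y)"
    by (simp add: algebra_simps rules)
qed

locale hk =
  fixes Q q :: "'k::field" and d :: nat
  assumes Q0: "Q \<noteq> 0" and q0: "q \<noteq> 0"
begin

abbreviation T where "T \<equiv> tg Q q d"
abbreviation K where "K \<equiv> Kop Q q d"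

lemma T_comm: "i + 1 < j \<Longrightarrow> j < d \<Longrightarrow> T i * T j = T j * T i"
proof -
  assume a: "i + 1 < j" "j < d"
  obtain j' where j: "j = Suc j'" using a by (cases j) auto
  show ?thesis
  proof (cases i)
    case 0
    then show ?thesis using a j tg_comm0[of j' d Q q] by simp
  next
    case (Suc i')
    then show ?thesis using a j tg_commS[of i' j' d Q q] by simp
  qed
qed

lemma K1: "K (Suc 0) = T 0" by simp
lemma KS: "1 \<le> i \<Longrightarrow> K (Suc i) = T i * K i * T i" by simp

lemma TK_far: "i < j \<Longrightarrow> j < d \<Longrightarrow> T j * K i = K i * T j"
proof (induction i)
  case 0
  then show ?case by simp
next
  case (Suc i)
  show ?case
  proof (cases "i = 0")
    case True
    then show ?thesis using Suc.prems T_comm[of 0 j] by simp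
  next
    case False
    have c1: "T j * T i = T i * T j" using T_comm[of i j] Suc.prems by simp
    have c2: "T j * K i = K i * T j" using Suc by simp
    have "T j * K (Suc i) = T j * T i * K i * T i" using False by (simp add: mult.assoc)
    also have "\<dots> = T i * K i * T i * T j" using c1 c2 by (simp add: mult.assoc)
    also have "\<dots> = K (Suc i) * T j" using False by simp
    finally show ?thesis .
  qed
qed

lemma T0K: "i \<le> d \<Longrightarrow> T 0 * K i = K i * T 0"
proof (induction i)
  case 0
  then show ?case by simp
next
  case (Suc i)
  show ?case
  proof (cases "i \<le> 1")
    case True
    then consider "i = 0" | "i = 1" by linarith
    then show ?thesis
    proof cases
      case 1 then show ?thesis by simp
    next
      case 2
      have "Suc 0 < d" using Suc.prems 2 by simp
      then have "T 0 * T (Suc 0) * T 0 * T (Suc 0) = T (Suc 0) * T 0 * T (Suc 0) * T 0"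
        by (rule tg_typeB[OF q0 Q0])
      then show ?thesis using 2 by (simp add: mult.assoc)
    qed
  next
    case False
    have c1: "T 0 * T i = T i * T 0" using T_comm[of 0 i] Suc.prems False by simp
    have c2: "T 0 * K i = K i * T 0" using Suc by simp
    have "T 0 * K (Suc i) = T 0 * T i * K i * T i" using False by (simp add: mult.assoc)
    also have "\<dots> = T i * K i * T i * T 0" using c1 c2 by (simp add: mult.assoc)
    also have "\<dots> = K (Suc i) * T 0" using False by simp
    finally show ?thesis .
  qed
qed

lemma TK_mid: "1 \<le> j \<Longrightarrow> j + 1 < i \<Longrightarrow> i \<le> d \<Longrightarrow> T j * K i = K i * T j"
proof (induction i)
  case 0
  then show ?case by simp
next
  case (Suc i)
  have i1: "1 \<le> i" using Suc.prems by simp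
  have KSi: "K (Suc i) = T i * K i * T i" using KS[OF i1] .
  show ?case
  proof (cases "j + 1 < i")
    case True
    have c1: "T j * T i = T i * T j" using T_comm[of j i] Suc.prems True by simp
    have c2: "T j * K i = K i * T j" using Suc.IH Suc.prems True by simp
    have "T j * K (Suc i) = (T j * T i) * K i * T i" unfolding KSi by (simp only: mult.assoc)
    also have "\<dots> = T i * (T j * K i) * T i" unfolding c1 by (simp only: mult.assoc)
    also have "\<dots> = T i * K i * (T j * T i)" unfolding c2 by (simp only: mult.assoc)
    also have "\<dots> = T i * K i * T i * T j" unfolding c1 by (simp only: mult.assoc)
    also have "\<dots> = K (Suc i) * T j" unfolding KSi ..
    finally show ?thesis .
  next
    case False
    then have ij: "i = Suc j" using Suc.prems by simp
    have jd: "Suc j < d" using Suc.prems ij by simp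
    obtain k where k: "j = Suc k" using Suc.prems by (cases j) auto
    have br: "T j * T i * T j = T i * T j * T i"
      using tg_braid[OF q0, of k d Q] jd k ij by simp
    have ci: "T i * K j = K j * T i" using TK_far[of j i] ij jd by simp
    have Ki: "K i = T j * K j * T j" using ij KS[of j] Suc.prems by simp
    have "T j * K (Suc i) = (T j * T i * T j) * K j * T j * T i" unfolding KSi Ki by (simp only: mult.assoc)
    also have "\<dots> = T i * T j * (T i * K j) * T j * T i" unfolding br by (simp only: mult.assoc)
    also have "\<dots> = T i * T j * K j * (T i * T j * T i)" unfolding ci by (simp only: mult.assoc)
    also have "\<dots> = T i * T j * K j * (T j * T i * T j)" unfolding br ..
    also have "\<dots> = K (Suc i) * T j" unfolding KSi Ki by (simp only: mult.assoc)
    finally show ?thesis .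
  qed
qed

lemma TK_low: "k + 2 \<le> i \<Longrightarrow> i \<le> d \<Longrightarrow> T k * K i = K i * T k"
proof (cases k)
  case 0
  assume "i \<le> d" then show ?thesis using 0 T0K by blast
next
  case (Suc k')
  assume "k + 2 \<le> i" "i \<le> d"
  then show ?thesis using Suc TK_mid[of k i] by simp
qed

lemma KK_lt: "j < i \<Longrightarrow> i \<le> d \<Longrightarrow> K i * K j = K j * K i"
proof (induction j)
  case 0
  then show ?case by simp
next
  case (Suc j)
  show ?case
  proof (cases "j = 0")
    case True
    then show ?thesis using T0K[of i] Suc.prems by simp
  next
    case False
    then have j1: "1 \<le> j" by simp
    have KSj: "K (Suc j) = T j * K j * T j" using KS[OF j1] .
    have c1: "K i * T j = T j * K i" using TK_low[of j i] Suc.prems False by simp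
    have c2: "K i * K j = K j * K i" using Suc by simp
    have "K i * K (Suc j) = (K i * T j) * K j * T j" unfolding KSj by (simp only: mult.assoc)
    also have "\<dots> = T j * (K i * K j) * T j" unfolding c1 by (simp only: mult.assoc)
    also have "\<dots> = T j * K j * (K i * T j)" unfolding c2 by (simp only: mult.assoc)
    also have "\<dots> = T j * K j * T j * K i" unfolding c1 by (simp only: mult.assoc)
    also have "\<dots> = K (Suc j) * K i" unfolding KSj ..
    finally show ?thesis .
  qed
qed

lemma KK: "i \<le> d \<Longrightarrow> j \<le> d \<Longrightarrow> K i * K j = K j * K i"
proof -
  assume a: "i \<le> d" "j \<le> d"
  consider "i = j" | "j < i" | "i < j" by linarith
  then show ?thesis
  proof cases
    case 1 then show ?thesis by simp
  next
    case 2 then show ?thesis using KK_lt[of j i] a by simp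
  next
    case 3 then show ?thesis using KK_lt[of i j] a by simp
  qed
qed

end

lemma sc_neg1: "sc (-1) * A = - A"
  by transfer (simp add: linop_neg)

inductive_set CA :: "'k::field lop \<Rightarrow> 'k lop \<Rightarrow> 'k lop set" for X Y where
  caS: "sc c \<in> CA X Y"
| caX: "X \<in> CA X Y"
| caY: "Y \<in> CA X Y"
| caP: "A \<in> CA X Y \<Longrightarrow> B \<in> CA X Y \<Longrightarrow> A + B \<in> CA X Y"
| caM: "A \<in> CA X Y \<Longrightarrow> B \<in> CA X Y \<Longrightarrow> A * B \<in> CA X Y"

lemma CA_comm_gen:
  assumes "\<And>B. B \<in> CA X Y \<Longrightarrow> Z * B = B * Z" and "A \<in> CA X Y"
  shows "A * Z = Z * A"
  using assms(2)
proof induction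
  case (caS c) then show ?case by (simp add: sc_comm)
next
  case caX then show ?case using assms(1)[OF CA.caX] by simp
next
  case caY then show ?case using assms(1)[OF CA.caY] by simp
next
  case (caP A B) then show ?case by (simp add: algebra_simps)
next
  case (caM A B)
  have "A * B * Z = A * (Z * B)" using caM by (simp add: mult.assoc)
  also have "\<dots> = Z * (A * B)" using caM by (simp add: mult.assoc[symmetric])
  finally show ?case .
qed

lemma CA_commX:
  assumes xy: "X * Y = Y * X" and "A \<in> CA X Y" shows "X * A = A * X"
  using assms(2)
proof induction
  case (caS c) then show ?case by (simp add: sc_comm)
next
  case caX then show ?case by simp
next
  case caY then show ?case using xy by simp
next
  case (caP A B) then show ?case by (simp add: algebra_simps)
next
  case (caM A B)
  have "X * (A * B) = (X * A) * B" by (simp only: mult.assoc)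
  also have "\<dots> = A * (X * B)" using caM by (simp only: mult.assoc)
  also have "\<dots> = A * (B * X)" using caM by simp
  finally show ?case by (simp only: mult.assoc)
qed

lemma CA_commY:
  assumes xy: "X * Y = Y * X" and "A \<in> CA X Y" shows "Y * A = A * Y"
  using assms(2)
proof induction
  case (caS c) then show ?case by (simp add: sc_comm)
next
  case caX then show ?case using xy by simp
next
  case caY then show ?case by simp
next
  case (caP A B) then show ?case by (simp add: algebra_simps)
next
  case (caM A B)
  have "Y * (A * B) = (Y * A) * B" by (simp only: mult.assoc)
  also have "\<dots> = A * (Y * B)" using caM by (simp only: mult.assoc)
  also have "\<dots> = A * (B * Y)" using caM by simp
  finally show ?case by (simp only: mult.assoc)
qed

lemma CA_comm:
  assumes xy: "X * Y = Y * X" and A: "A \<in> CA X Y" and B: "B \<in> CA X Y"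
  shows "A * B = B * A"
  using B
proof induction
  case (caS c) then show ?case by (simp add: sc_comm)
next
  case caX then show ?case using CA_commX[OF xy A] by simp
next
  case caY then show ?case using CA_commY[OF xy A] by simp
next
  case (caP B1 B2) then show ?case by (simp add: algebra_simps)
next
  case (caM B1 B2)
  have "A * (B1 * B2) = (A * B1) * B2" by (simp only: mult.assoc)
  also have "\<dots> = B1 * (A * B2)" using caM by (simp only: mult.assoc)
  also have "\<dots> = B1 * (B2 * A)" using caM by simp
  finally show ?case by (simp only: mult.assoc)
qed

lemma CA_peval: "A \<in> CA X Y \<Longrightarrow> peval p A \<in> CA X Y"
proof (induction p rule: pCons_induct)
  case 0 then show ?case using CA.caS[of 0 X Y] by (simp add: sc_zero)
next
  case (pCons a p) then show ?case by (simp add: peval_pCons CA.intros)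
qed

lemma CA_one: "1 \<in> CA X Y" using CA.caS[of 1] by (simp add: sc_one)
lemma CA_minus: "A \<in> CA X Y \<Longrightarrow> B \<in> CA X Y \<Longrightarrow> A - B \<in> CA X Y"
proof -
  assume "A \<in> CA X Y" "B \<in> CA X Y"
  then have "A + sc (-1) * B \<in> CA X Y" by (simp add: CA.intros)
  then show ?thesis by (simp add: sc_neg1)
qed

lemma intertwine:
  assumes "P * Y = X * P"
  shows "P * peval p Y = peval p X * P"
proof (induction p rule: pCons_induct)
  case 0 then show ?case by simp
next
  case (pCons a p)
  have "P * peval (pCons a p) Y = P * sc a + (P * Y) * peval p Y"
    by (simp add: peval_pCons distrib_left mult.assoc)
  also have "\<dots> = sc a * P + X * (peval p X * P)"
    using pCons assms by (simp add: sc_comm mult.assoc)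
  also have "\<dots> = peval (pCons a p) X * P"
    by (simp add: peval_pCons distrib_right mult.assoc)
  finally show ?case .
qed

context hk
begin

inductive_set goodA :: "'k lop set" where
  gT: "j < d \<Longrightarrow> T j \<in> goodA"
| gS: "sc c \<in> goodA"
| gP: "A \<in> goodA \<Longrightarrow> B \<in> goodA \<Longrightarrow> A + B \<in> goodA"
| gM: "A \<in> goodA \<Longrightarrow> B \<in> goodA \<Longrightarrow> A * B \<in> goodA"

lemma good_one: "1 \<in> goodA" using gS[of 1] by (simp add: sc_one)
lemma good_zero: "0 \<in> goodA" using gS[of 0] by (simp add: sc_zero)
lemma good_minus: "A \<in> goodA \<Longrightarrow> B \<in> goodA \<Longrightarrow> A - B \<in> goodA"
proof -
  assume "A \<in> goodA" "B \<in> goodA"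
  then have "A + sc (-1) * B \<in> goodA" by (simp add: goodA.intros)
  then show ?thesis by (simp add: sc_neg1)
qed

lemma good_peval: "A \<in> goodA \<Longrightarrow> peval p A \<in> goodA"
proof (induction p rule: pCons_induct)
  case 0 then show ?case by (simp add: good_zero)
next
  case (pCons a p) then show ?case by (simp add: peval_pCons goodA.intros)
qed

lemma good_K: "i \<le> d \<Longrightarrow> K i \<in> goodA"
proof (induction i)
  case 0 then show ?case by (simp add: good_one)
next
  case (Suc i)
  then show ?case by (simp add: goodA.intros)
qed

lemma good_CA: "X \<in> goodA \<Longrightarrow> Y \<in> goodA \<Longrightarrow> A \<in> CA X Y \<Longrightarrow> A \<in> goodA"
proof -
  assume x: "X \<in> goodA" and y: "Y \<in> goodA" and a: "A \<in> CA X Y"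
  from a show ?thesis by induction (auto intro: goodA.intros x y)
qed

definition stable :: "(int list \<Rightarrow> 'k) set \<Rightarrow> bool" where
  "stable S \<longleftrightarrow> (\<lambda>x. 0) \<in> S \<and> (\<forall>v\<in>S. \<forall>j<d. app (T j) v \<in> S) \<and>
     (\<forall>v\<in>S. \<forall>w\<in>S. (\<lambda>x. v x + w x) \<in> S) \<and> (\<forall>c. \<forall>v\<in>S. (\<lambda>x. c * v x) \<in> S)"

lemma good_app: "A \<in> goodA \<Longrightarrow> stable S \<Longrightarrow> v \<in> S \<Longrightarrow> app A v \<in> S"
proof (induction A arbitrary: v rule: goodA.induct)
  case (gT j) then show ?case by (simp add: stable_def)
next
  case (gS c) then show ?case by (simp add: stable_def app_sc)
next
  case (gP A B) then show ?case by (simp add: stable_def app_plus)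
next
  case (gM A B) then show ?case by (simp add: app_times)
qed

definition Zv :: "(int list \<Rightarrow> 'k) set \<Rightarrow> (int list \<Rightarrow> 'k) set \<Rightarrow> 'k lop \<Rightarrow> bool" where
  "Zv M U A \<longleftrightarrow> (\<forall>v\<in>M. app A v \<in> U)"

lemma Z_add: "stable U \<Longrightarrow> Zv M U A \<Longrightarrow> Zv M U B \<Longrightarrow> Zv M U (A + B)"
  by (simp add: Zv_def stable_def app_plus)

lemma Z_sc: "stable U \<Longrightarrow> Zv M U A \<Longrightarrow> Zv M U (sc c * A)"
  by (simp add: Zv_def stable_def app_times app_sc app_smult)

lemma Z_neg: "stable U \<Longrightarrow> Zv M U A \<Longrightarrow> Zv M U (- A)"
  using Z_sc[of U M A "-1"] by (simp add: sc_neg1)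

lemma Z_diff: "stable U \<Longrightarrow> Zv M U A \<Longrightarrow> Zv M U B \<Longrightarrow> Zv M U (A - B)"
  using Z_add[of U M A "- B"] Z_neg[of U M B] by simp

lemma Z_right: "stable U \<Longrightarrow> C \<in> goodA \<Longrightarrow> Zv M U A \<Longrightarrow> Zv M U (A * C)"
  by (simp add: Zv_def app_times good_app)

lemma Z_left: "stable M \<Longrightarrow> C \<in> goodA \<Longrightarrow> Zv M U A \<Longrightarrow> Zv M U (C * A)"
  by (simp add: Zv_def app_times good_app)

end

definition Pl :: "'k::field list \<Rightarrow> 'k poly" where
  "Pl rs = prod_list (map (\<lambda>r. [:-r, 1:]) rs)"

lemma peval_prod_list: "peval (prod_list ps) A = prod_list (map (\<lambda>p. peval p A) ps)"
  by (induction ps) (simp_all add: peval_one peval_mult)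

lemma peval_Pl: "peval (Pl rs) A = prod_list (map (\<lambda>r. A - sc r) rs)"
  by (simp add: Pl_def peval_prod_list o_def peval_lin)

lemma CA_prod_list: "(\<forall>x\<in>set xs. x \<in> CA X Y) \<Longrightarrow> prod_list xs \<in> CA X Y"
  by (induction xs) (simp_all add: CA_one CA.caM)

lemma sc_two: "sc 2 = (2::'k::field lop)"
  by (metis one_add_one sc_add sc_one)

lemma peval_quad: "peval [:a, b, 1:] A = sc a + sc b * A + A * A"
  by (simp add: peval_pCons sc_one sc_zero sc_comm distrib_left)

context hk
begin

lemma jm_step:
  assumes M: "stable M" and U: "stable U" and i: "1 \<le> i" "i < d"
    and F: "Zv M U (peval (Pl rs) (K i))"
  shows "Zv M U (peval (prod_list (map (\<lambda>r. [:r*r, - (((inverse q - q) * (inverse q - q) + 2) * r), 1:] * Pl rs) rs)) (K (Suc i)))"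
proof -
  define c where "c = inverse q - q"
  define e where "e = c * c + 2"
  define X where "X = K i"
  define Y where "Y = K (Suc i)"
  define Tt where "Tt = T i"
  define cc where "cc = sc c"
  obtain i' where i': "i = Suc i'" using i by (cases i) auto
  have yY: "Y = Tt * X * Tt" unfolding Y_def X_def Tt_def using KS[OF i(1)] .
  have quad: "Tt * Tt = cc * Tt + 1" unfolding Tt_def cc_def c_def i' by (rule tgS_quad[OF q0])
  have xy: "X * Y = Y * X" unfolding X_def Y_def using KK[of i "Suc i"] i by simp
  have cT: "Tt * cc = cc * Tt" and cX: "X * cc = cc * X" and cY: "Y * cc = cc * Y"
    unfolding cc_def by (simp_all add: sc_comm)
  define phi where "phi = Tt * (X - Y) + cc * Y"
  note pr = phi_rel[OF quad yY xy cT cX cY, folded phi_def]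
  define FX where "FX = peval (Pl rs) X"
  define FY where "FY = peval (Pl rs) Y"
  have inter: "phi * FY = FX * phi" unfolding FX_def FY_def by (rule intertwine[OF pr(2)])
  have gX: "X \<in> goodA" unfolding X_def by (rule good_K) (use i in simp)
  have gY: "Y \<in> goodA" unfolding Y_def by (rule good_K) (use i in simp)
  have gT: "Tt \<in> goodA" unfolding Tt_def using gT i by simp
  have gphi: "phi \<in> goodA" unfolding phi_def cc_def using gX gY gT by (simp add: goodA.intros good_minus)
  have gFX: "FX \<in> goodA" unfolding FX_def using gX by (rule good_peval)
  have gFY: "FY \<in> goodA" unfolding FY_def using gY by (rule good_peval)
  have ZF: "Zv M U FX" using F unfolding FX_def X_def .
  have Z1: "Zv M U (phi * FX * phi)" using Z_right[OF U gphi Z_left[OF M gphi ZF]] .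
  have Z2: "Zv M U (phi * phi * FY)"
  proof -
    have "phi * phi * FY = phi * FX * phi" using inter by (simp add: mult.assoc)
    then show ?thesis using Z1 by simp
  qed
  define Hq where "Hq = X * X - sc e * (X * Y) + Y * Y"
  have Hq_eq: "Hq = - (phi * phi)"
  proof -
    have e2: "sc e = sc (c * c) + 2" unfolding e_def by (simp add: sc_add sc_two)
    have "Hq = X * X - (sc (c * c) + 2) * (X * Y) + Y * Y" unfolding Hq_def e2 ..
    also have "\<dots> = (X - Y) * (X - Y) - cc * cc * (X * Y)"
      unfolding cc_def using xy by (simp add: algebra_simps sc_mult mult_2)
    also have "\<dots> = - (phi * phi)" using pr(3) by simp
    finally show ?thesis .
  qed
  define h where "h = Hq * FY"
  have Zh: "Zv M U h"
  proof -
    have "h = - (phi * phi * FY)" unfolding h_def Hq_eq by simp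
    then show ?thesis using Z_neg[OF U Z2] by simp
  qed
  define hr where "hr r = (sc (r * r) - sc (e * r) * Y + Y * Y) * FY" for r
  define gr where "gr r = (X + sc r - sc e * Y) * FY" for r
  have xs: "X * sc t = sc t * X" for t by (simp add: sc_comm)
  have xsy: "X * (sc t * Z) = sc t * (X * Z)" for t Z by (metis mult.assoc sc_comm)
  have ss: "sc s * (sc t * Z) = sc (s * t) * Z" for s t Z by (simp add: sc_mult mult.assoc)
  have ss2: "sc s * sc t = sc (s * t)" for s t by (simp add: sc_mult)
  have ident: "h - hr r = (X - sc r) * gr r" for r
  proof -
    have "Hq - (sc (r * r) - sc (e * r) * Y + Y * Y) = (X - sc r) * (X + sc r - sc e * Y)"
      unfolding Hq_def by (simp add: algebra_simps xs xsy ss ss2 mult.commute)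
    then show ?thesis unfolding h_def hr_def gr_def
      by (metis left_diff_distrib mult.assoc)
  qed
  have caX: "X \<in> CA X Y" and caY: "Y \<in> CA X Y" by (simp_all add: CA.intros)
  have caFY: "FY \<in> CA X Y" unfolding FY_def by (rule CA_peval[OF caY])
  have caS: "sc t \<in> CA X Y" for t by (rule CA.caS)
  have caXr: "X - sc r \<in> CA X Y" for r by (simp add: CA_minus caX caS)
  have cahr: "hr r \<in> CA X Y" for r unfolding hr_def
    by (intro CA.caM CA.caP CA_minus caS caY caFY)
  have cagr: "gr r \<in> CA X Y" for r unfolding gr_def
    by (intro CA.caM CA.caP CA_minus caS caY caX caFY)
  have good: "A \<in> CA X Y \<Longrightarrow> A \<in> goodA" for A using good_CA[OF gX gY] by blast
  have prod: "\<forall>E\<in>CA X Y. Zv M U (E * prod_list (map (\<lambda>r. X - sc r) rs')) \<longrightarrow>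
      Zv M U (E * prod_list (map hr rs'))" for rs'
  proof (induction rs')
    case Nil then show ?case by simp
  next
    case (Cons r rs')
    show ?case
    proof (intro ballI impI)
      fix E assume E: "E \<in> CA X Y" and ZE: "Zv M U (E * prod_list (map (\<lambda>r. X - sc r) (r # rs')))"
      define P' where "P' = prod_list (map (\<lambda>r. X - sc r) rs')"
      define H' where "H' = prod_list (map hr rs')"
      have caP': "P' \<in> CA X Y" unfolding P'_def by (rule CA_prod_list) (auto simp: caXr)
      have caH': "H' \<in> CA X Y" unfolding H'_def by (rule CA_prod_list) (auto simp: cahr)
      define E' where "E' = E * (X - sc r) * gr r"
      have caE': "E' \<in> CA X Y" unfolding E'_def by (intro CA.caM E caXr cagr)
      have "E' * P' = (E * ((X - sc r) * P')) * gr r"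
      proof -
        have "E' * P' = E * (X - sc r) * (gr r * P')" unfolding E'_def by (simp add: mult.assoc)
        also have "\<dots> = E * (X - sc r) * (P' * gr r)" using CA_comm[OF xy cagr caP'] by simp
        finally show ?thesis by (simp add: mult.assoc)
      qed
      then have ZE': "Zv M U (E' * P')" using Z_right[OF U good[OF cagr]] ZE unfolding P'_def by simp
      have IH: "Zv M U (E' * H')" using Cons.IH caE' ZE' unfolding P'_def H'_def by blast
      have Zh2: "Zv M U (E * h * H')"
        using Z_right[OF U good[OF caH'] Z_left[OF M good[OF E] Zh]] .
      have "E * prod_list (map hr (r # rs')) = E * h * H' - E' * H'"
      proof -
        have "E * prod_list (map hr (r # rs')) = E * (hr r * H')" unfolding H'_def by simp
        also have "hr r = h - (X - sc r) * gr r" using ident[of r] by (simp add: algebra_simps)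
        finally show ?thesis unfolding E'_def by (simp add: algebra_simps)
      qed
      then show "Zv M U (E * prod_list (map hr (r # rs')))" using Z_diff[OF U Zh2 IH] by simp
    qed
  qed
  have z: "Zv M U (1 * prod_list (map (\<lambda>r. X - sc r) rs))" using ZF unfolding FX_def peval_Pl by simp
  have "Zv M U (1 * prod_list (map hr rs))"
    using prod[of rs] CA_one[of X Y] z by blast
  moreover have "prod_list (map hr rs) =
      peval (prod_list (map (\<lambda>r. [:r*r, - (((inverse q - q) * (inverse q - q) + 2) * r), 1:] * Pl rs) rs)) (K (Suc i))"
  proof -
    have each: "hr r = peval ([:r*r, - (e * r), 1:] * Pl rs) Y" for r
      unfolding hr_def FY_def peval_mult peval_quad sc_minus by simp
    have "prod_list (map hr rs) = prod_list (map (\<lambda>r. peval ([:r*r, - (e * r), 1:] * Pl rs) Y) rs)"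
      by (rule arg_cong[where f=prod_list], rule map_cong) (simp_all only: each)
    also have "\<dots> = peval (prod_list (map (\<lambda>r. [:r*r, - (e * r), 1:] * Pl rs) rs)) Y"
      by (simp add: peval_prod_list o_def)
    finally show ?thesis unfolding e_def c_def Y_def .
  qed
  ultimately show ?thesis by simp
qed

end

definition splits :: "'k::field set \<Rightarrow> 'k poly \<Rightarrow> bool" where
  "splits S P \<longleftrightarrow> (\<exists>\<kappa> rs. \<kappa> \<noteq> 0 \<and> set rs \<subseteq> S \<and> P = smult \<kappa> (Pl rs))"

lemma Pl_Nil: "Pl [] = 1" by (simp add: Pl_def)
lemma Pl_Cons: "Pl (r # rs) = [:-r, 1:] * Pl rs" by (simp add: Pl_def)
lemma Pl_append: "Pl (xs @ ys) = Pl xs * Pl ys" by (simp add: Pl_def)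

lemma splits_mult: "splits S P \<Longrightarrow> splits S R \<Longrightarrow> splits S (P * R)"
proof -
  assume "splits S P" "splits S R"
  then obtain k1 xs k2 ys where "k1 \<noteq> 0" "set xs \<subseteq> S" "P = smult k1 (Pl xs)"
    "k2 \<noteq> 0" "set ys \<subseteq> S" "R = smult k2 (Pl ys)" by (auto simp: splits_def)
  then show ?thesis unfolding splits_def
    by (intro exI[of _ "k1 * k2"] exI[of _ "xs @ ys"]) (auto simp: Pl_append mult.commute)
qed

lemma splits_one: "splits S 1"
  unfolding splits_def by (intro exI[of _ 1] exI[of _ "[]"]) (simp add: Pl_Nil)

lemma splits_prod_list: "(\<forall>p\<in>set ps. splits S p) \<Longrightarrow> splits S (prod_list ps)"
  by (induction ps) (simp_all add: splits_one splits_mult)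

lemma splits_mono: "S \<subseteq> S' \<Longrightarrow> splits S P \<Longrightarrow> splits S' P"
  unfolding splits_def by blast

lemma splits_Pl: "set rs \<subseteq> S \<Longrightarrow> splits S (Pl rs)"
  unfolding splits_def by (intro exI[of _ 1] exI[of _ rs]) simp

definition Rset :: "'k::field \<Rightarrow> 'k set \<Rightarrow> nat \<Rightarrow> 'k set" where
  "Rset q B i = {b * q powi (2 * j) | b j. b \<in> B \<and> \<bar>j\<bar> < int i}"

lemma Rset_mono: "i \<le> i' \<Longrightarrow> Rset q B i \<subseteq> Rset q B i'"
  unfolding Rset_def by fastforce

lemma Rset_1: "B \<subseteq> Rset q B 1"
proof
  fix b assume "b \<in> B"
  then show "b \<in> Rset q B 1" unfolding Rset_def by (intro CollectI exI[of _ b] exI[of _ 0]) simp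
qed

lemma Rset_up:
  assumes q: "q \<noteq> 0" and r: "r \<in> Rset q B i"
  shows "r * q\<^sup>2 \<in> Rset q B (Suc i)" and "r * inverse (q\<^sup>2) \<in> Rset q B (Suc i)"
proof -
  obtain b j where b: "b \<in> B" "\<bar>j\<bar> < int i" "r = b * q powi (2 * j)" using r by (auto simp: Rset_def)
  have "r * q\<^sup>2 = b * q powi (2 * (j + 1))"
    using q b(3) by (simp add: power_int_add algebra_simps)
  then show "r * q\<^sup>2 \<in> Rset q B (Suc i)" unfolding Rset_def using b by (intro CollectI exI[of _ b] exI[of _ "j+1"]) auto
  have "r * inverse (q\<^sup>2) = b * q powi (2 * (j - 1))"
    using q b(3) by (simp add: power_int_diff field_simps)
  then show "r * inverse (q\<^sup>2) \<in> Rset q B (Suc i)" unfolding Rset_def using b by (intro CollectI exI[of _ b] exI[of _ "j - 1"]) auto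
qed

lemma quad_Pl:
  assumes q: "q \<noteq> 0"
  shows "[:r*r, - (((inverse q - q) * (inverse q - q) + 2) * r), 1:] = Pl [r * q\<^sup>2, r * inverse (q\<^sup>2)]"
proof -
  have "Pl [r * q\<^sup>2, r * inverse (q\<^sup>2)] = [: (r * q\<^sup>2) * (r * inverse (q\<^sup>2)), - (r * q\<^sup>2 + r * inverse (q\<^sup>2)), 1:]"
    by (simp add: Pl_def algebra_simps)
  also have "(r * q\<^sup>2) * (r * inverse (q\<^sup>2)) = r * r" using q by (simp add: field_simps)
  also have "r * q\<^sup>2 + r * inverse (q\<^sup>2) = ((inverse q - q) * (inverse q - q) + 2) * r"
    using q by (simp add: field_simps power2_eq_square)
  finally show ?thesis by simp
qed

context hk
begin

lemma Z_unsc: "stable U \<Longrightarrow> \<kappa> \<noteq> 0 \<Longrightarrow> Zv M U (sc \<kappa> * A) \<Longrightarrow> Zv M U A"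
proof -
  assume U: "stable U" and k: "\<kappa> \<noteq> 0" and Z: "Zv M U (sc \<kappa> * A)"
  have "Zv M U (sc (inverse \<kappa>) * (sc \<kappa> * A))" by (rule Z_sc[OF U Z])
  moreover have "sc (inverse \<kappa>) * (sc \<kappa> * A) = A" using k
    by (simp add: mult.assoc[symmetric] sc_mult[symmetric] sc_one)
  ultimately show ?thesis by simp
qed

lemma jm:
  assumes M: "stable M" and U: "stable U" and Z0: "Zv M U (peval P0 (T 0))" and S0: "splits B0 P0"
  shows "1 \<le> i \<Longrightarrow> i \<le> d \<Longrightarrow> \<exists>P. splits (Rset q B0 i) P \<and> Zv M U (peval P (K i))"
proof (induction i rule: nat_induct_at_least)
  case base
  then show ?case using Z0 splits_mono[OF Rset_1 S0] by auto
next
  case (Suc i)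
  obtain P where P: "splits (Rset q B0 i) P" "Zv M U (peval P (K i))" using Suc by auto
  obtain \<kappa> rs where k: "\<kappa> \<noteq> 0" "set rs \<subseteq> Rset q B0 i" "P = smult \<kappa> (Pl rs)"
    using P(1) by (auto simp: splits_def)
  have ZP: "Zv M U (peval (Pl rs) (K i))"
    using Z_unsc[OF U k(1)] P(2) k(3) by (simp add: peval_smult)
  have id: "i < d" using Suc by simp
  note st = jm_step[OF M U Suc.hyps id ZP]
  have "splits (Rset q B0 (Suc i)) (prod_list (map (\<lambda>r. [:r*r, - (((inverse q - q) * (inverse q - q) + 2) * r), 1:] * Pl rs) rs))"
  proof (rule splits_prod_list, intro ballI)
    fix p assume "p \<in> set (map (\<lambda>r. [:r*r, - (((inverse q - q) * (inverse q - q) + 2) * r), 1:] * Pl rs) rs)"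
    then obtain r where r: "r \<in> set rs" "p = [:r*r, - (((inverse q - q) * (inverse q - q) + 2) * r), 1:] * Pl rs" by auto
    have rR: "r \<in> Rset q B0 i" using r k by auto
    have s1: "splits (Rset q B0 (Suc i)) [:r*r, - (((inverse q - q) * (inverse q - q) + 2) * r), 1:]"
      unfolding quad_Pl[OF q0] using Rset_up[OF q0 rR] by (intro splits_Pl) auto
    have s2: "splits (Rset q B0 (Suc i)) (Pl rs)"
      using k(2) Rset_mono[of i "Suc i" q B0] by (intro splits_Pl) auto
    show "splits (Rset q B0 (Suc i)) p" using r splits_mult[OF s1 s2] by simp
  qed
  then show ?case using st by blast
qed

end

lemma sym_pow:
  fixes T X Y :: "'a::ring_1"
  assumes s1: "T*(X+Y) = (X+Y)*T" and s2: "T*(X*Y) = (X*Y)*T" and xy: "X*Y = Y*X"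
  shows "T*(X^k + Y^k) = (X^k + Y^k)*T"
proof (induction k rule: less_induct)
  case (less k)
  show ?case
  proof (cases k)
    case 0 then show ?thesis by (simp add: mult_2 mult_2_right)
  next
    case (Suc k1)
    show ?thesis
    proof (cases k1)
      case 0 then show ?thesis using Suc s1 by simp
    next
      case (Suc k2)
      have yx: "Y * X ^ n = X ^ n * Y" for n using power_commuting_commutes[OF xy, of n] by simp
      have a: "(X+Y)*(X^k1 + Y^k1) = X^k + X*Y^k1 + Y*X^k1 + Y^k"
        using \<open>k = Suc k1\<close> by (simp add: algebra_simps)
      have b1: "X*Y*X^k2 = X^k1 * Y" using Suc yx[of k2] by (simp add: mult.assoc)
      have b2: "X*Y*Y^k2 = X*Y^k1" using Suc by (simp add: mult.assoc)
      have b: "(X*Y)*(X^k2 + Y^k2) = X*Y^k1 + X^k1*Y" using b1 b2 by (simp add: distrib_left)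
      have e: "X^k + Y^k = (X+Y)*(X^k1 + Y^k1) - (X*Y)*(X^k2 + Y^k2)"
        unfolding a b using yx[of k1] by (simp add: algebra_simps)
      have i1: "T*(X^k1 + Y^k1) = (X^k1 + Y^k1)*T" using less \<open>k = Suc k1\<close> by simp
      have i2: "T*(X^k2 + Y^k2) = (X^k2 + Y^k2)*T" using less \<open>k = Suc k1\<close> Suc by simp
      have "T*((X+Y)*(X^k1 + Y^k1)) = (X+Y)*(X^k1 + Y^k1)*T"
        by (metis i1 s1 mult.assoc)
      moreover have "T*((X*Y)*(X^k2 + Y^k2)) = (X*Y)*(X^k2 + Y^k2)*T"
        by (metis i2 s2 mult.assoc)
      ultimately show ?thesis unfolding e by (simp add: algebra_simps)
    qed
  qed
qed


lemma sum_comm: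
  fixes T :: "'a::ring_1"
  shows "(\<And>k. k \<in> S \<Longrightarrow> T * f k = f k * T) \<Longrightarrow> T * sum f S = sum f S * T"
  by (induction S rule: infinite_finite_induct) (simp_all add: distrib_left distrib_right)

lemma sym_peval_sum:
  assumes s1: "T*(X+Y) = (X+Y)*T" and s2: "T*(X*Y) = (X*Y)*T" and xy: "X*Y = Y*X"
  shows "T*(peval g X + peval g Y) = (peval g X + peval g Y)*T"
proof -
  have "peval g X + peval g Y = (\<Sum>k\<le>degree g. sc (coeff g k) * (X^k + Y^k))"
    by (simp add: peval_def sum.distrib distrib_left)
  moreover have "T * (sc (coeff g k) * (X^k + Y^k)) = (sc (coeff g k) * (X^k + Y^k)) * T" for k
    using sym_pow[OF s1 s2 xy, of k] by (metis mult.assoc sc_comm)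
  moreover have "T * (\<Sum>k\<le>degree g. sc (coeff g k) * (X^k + Y^k)) = (\<Sum>k\<le>degree g. sc (coeff g k) * (X^k + Y^k)) * T"
    by (rule sum_comm) (use calculation(2) in blast)
  ultimately show ?thesis by simp
qed


lemma sym_prod:
  assumes s1: "T*(X+Y) = (X+Y)*T" and s2: "T*(X*Y) = (X*Y)*T" and xy: "X*Y = Y*X"
  shows "T*(peval g X * peval g Y) = (peval g X * peval g Y)*T"
proof (induction g rule: pCons_induct)
  case 0 then show ?case by simp
next
  case (pCons a g)
  define gX where "gX = peval g X"
  define gY where "gY = peval g Y"
  have gxy: "gX * Y = Y * gX" unfolding gX_def using peval_comm[of Y X g] xy by simp
  have e: "peval (pCons a g) X * peval (pCons a g) Y =
     sc (a*a) + sc a * (peval (pCons 0 g) X + peval (pCons 0 g) Y) + (X*Y) * (gX * gY)"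
  proof -
    have "peval (pCons a g) X * peval (pCons a g) Y = (sc a + X * gX) * (sc a + Y * gY)"
      by (simp add: peval_pCons gX_def gY_def)
    also have "\<dots> = sc a * sc a + sc a * (Y * gY) + X * gX * sc a + X * (gX * Y) * gY"
      by (simp add: algebra_simps)
    also have "\<dots> = sc (a*a) + sc a * (X * gX + Y * gY) + (X*Y) * (gX * gY)"
    proof -
      have t1: "X * gX * sc a = sc a * (X * gX)" by (rule sc_comm[symmetric])
      have t2: "X * (gX * Y) * gY = (X*Y) * (gX * gY)" using gxy by (simp add: mult.assoc)
      show ?thesis unfolding t1 t2 by (simp add: sc_mult distrib_left add_ac)
    qed
    finally show ?thesis by (simp add: peval_pCons sc_zero gX_def gY_def)
  qed
  have c1: "T * sc (a*a) = sc (a*a) * T" by (simp add: sc_comm)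
  have c2: "T * (sc a * (peval (pCons 0 g) X + peval (pCons 0 g) Y)) = (sc a * (peval (pCons 0 g) X + peval (pCons 0 g) Y)) * T"
    using sym_peval_sum[OF s1 s2 xy, of "pCons 0 g"] by (metis mult.assoc sc_comm)
  have c3: "T * ((X*Y) * (gX * gY)) = ((X*Y) * (gX * gY)) * T"
    using pCons s2 unfolding gX_def gY_def by (metis mult.assoc)
  show ?case unfolding e using c1 c2 c3 by (simp add: algebra_simps)
qed


definition cop :: "'k::field poly \<Rightarrow> 'k poly \<Rightarrow> bool" where
  "cop P R \<longleftrightarrow> (\<exists>a b. a * P + b * R = 1)"

lemma cop_sym: "cop P R \<Longrightarrow> cop R P"
  unfolding cop_def by (metis add.commute)

lemma cop_mult: "cop P R1 \<Longrightarrow> cop P R2 \<Longrightarrow> cop P (R1 * R2)"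
proof -
  assume "cop P R1" "cop P R2"
  then obtain a b c e where 1: "a * P + b * R1 = 1" and 2: "c * P + e * R2 = 1" by (auto simp: cop_def)
  have "(a * P + b * R1) * (c * P + e * R2) = 1" using 1 2 by simp
  then have "(a * c * P + a * e * R2 + b * R1 * c) * P + (b * e) * (R1 * R2) = 1"
    by (simp add: algebra_simps)
  then show ?thesis unfolding cop_def by blast
qed

lemma cop_one: "cop P 1"
  unfolding cop_def by (rule exI[of _ 0], rule exI[of _ 1]) simp

lemma cop_lin: "x \<noteq> y \<Longrightarrow> cop [:-x, 1:] [:-y, 1:]"
proof -
  assume "x \<noteq> y"
  then have ne: "y - x \<noteq> 0" by simp
  have "[:inverse (y - x):] * [:-x, 1:] + [:- inverse (y - x):] * [:-y, 1:] =
        [:inverse (y - x) * (y - x):]"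
    by (simp add: algebra_simps)
  also have "\<dots> = 1" using ne by (simp add: one_pCons)
  finally have "[:inverse (y - x):] * [:-x, 1:] + [:- inverse (y - x):] * [:-y, 1:] = 1" .
  then show ?thesis unfolding cop_def by blast
qed

lemma cop_lin_Pl: "x \<notin> set ys \<Longrightarrow> cop [:-x, 1:] (Pl ys)"
proof (induction ys)
  case Nil then show ?case by (simp add: Pl_Nil cop_one)
next
  case (Cons y ys)
  then have "x \<noteq> y" "x \<notin> set ys" by auto
  then show ?case unfolding Pl_Cons using Cons.IH by (intro cop_mult cop_lin) auto
qed

lemma cop_Pl: "set xs \<inter> set ys = {} \<Longrightarrow> cop (Pl xs) (Pl ys)"
proof (induction xs)
  case Nil show ?case unfolding Pl_Nil by (rule cop_sym[OF cop_one])
next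
  case (Cons x xs)
  have a: "cop (Pl ys) [:-x, 1:]" using Cons.prems by (intro cop_sym[OF cop_lin_Pl]) auto
  have b: "cop (Pl ys) (Pl xs)" using Cons by (intro cop_sym[of "Pl xs"]) auto
  show ?case unfolding Pl_Cons by (rule cop_sym[OF cop_mult[OF a b]])
qed

lemma Pl_filter: "Pl rs = Pl (filter P rs) * Pl (filter (\<lambda>x. \<not> P x) rs)"
  by (induction rs) (simp_all add: Pl_Nil Pl_Cons algebra_simps)

lemma poly_Pl_zero: "poly (Pl rs) e = 0 \<longleftrightarrow> e \<in> set rs"
  by (induction rs) (auto simp: Pl_Nil Pl_Cons)

lemma prod_list_map_remove1:
  fixes f :: "'a \<Rightarrow> 'b::comm_monoid_mult"
  shows "x \<in> set xs \<Longrightarrow> prod_list (map f xs) = f x * prod_list (map f (remove1 x xs))"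
  by (induction xs) (auto simp: mult.left_commute)

lemma proj_props:
  fixes A :: "'k::field lop"
  assumes R0: "peval (Pl rs) A = 0" and ab: "a * Pl gs + b * Pl hs = 1" and Rf: "Pl rs = Pl hs * Pl gs"
  shows "peval (a * Pl gs) A * peval (a * Pl gs) A = peval (a * Pl gs) A"
    and "peval (Pl hs) A * peval (a * Pl gs) A = 0"
    and "1 - peval (a * Pl gs) A = peval (b * Pl hs) A"
    and "peval (Pl gs) A * peval (b * Pl hs) A = 0"
proof -
  have one: "peval (a * Pl gs) A + peval (b * Pl hs) A = 1"
    using arg_cong[OF ab, of "\<lambda>p. peval p A"] by (simp add: peval_add peval_one)
  then show 3: "1 - peval (a * Pl gs) A = peval (b * Pl hs) A" by (simp add: algebra_simps)
  have "Pl hs * (a * Pl gs) = a * Pl rs" using Rf by (simp add: algebra_simps)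
  then show 2: "peval (Pl hs) A * peval (a * Pl gs) A = 0"
    using R0 by (metis peval_mult mult_zero_right)
  have "Pl gs * (b * Pl hs) = b * Pl rs" using Rf by (simp add: algebra_simps)
  then show "peval (Pl gs) A * peval (b * Pl hs) A = 0"
    using R0 by (metis peval_mult mult_zero_right)
  have "(a * Pl gs) * (b * Pl hs) = (a * b) * Pl rs" using Rf by (simp add: algebra_simps)
  then have z: "peval (a * Pl gs) A * peval (b * Pl hs) A = 0"
    using R0 by (metis peval_mult mult_zero_right)
  have e: "peval (b * Pl hs) A = 1 - peval (a * Pl gs) A" using 3 by simp
  have "peval (a * Pl gs) A * peval (a * Pl gs) A = peval (a * Pl gs) A * (1 - peval (b * Pl hs) A)"
    unfolding e by simp
  also have "\<dots> = peval (a * Pl gs) A" using z by (simp add: algebra_simps)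
  finally show "peval (a * Pl gs) A * peval (a * Pl gs) A = peval (a * Pl gs) A" .
qed

context hk
begin

lemma stable_UNIV: "stable UNIV" by (simp add: stable_def)
lemma stable_zero: "stable {\<lambda>x. 0}"
  by (simp add: stable_def app_fzero)

lemma Zv_zero: "Zv UNIV {\<lambda>x. 0} A \<Longrightarrow> A = 0"
  by (rule lop_eqI) (simp add: Zv_def app_zero)

lemma T0_quad_poly: "peval (Pl [inverse Q, - Q]) (T 0) = 0"
proof -
  have pl: "Pl [inverse Q, - Q] = [:- inverse Q, 1:] * [:- (- Q), 1:]" by (simp add: Pl_def)
  have "peval (Pl [inverse Q, - Q]) (T 0) = (T 0 - sc (inverse Q)) * (T 0 + sc Q)"
    unfolding pl peval_mult peval_lin by (simp add: sc_minus)
  also have "\<dots> = T 0 * T 0 + sc Q * T 0 - sc (inverse Q) * T 0 - sc (inverse Q) * sc Q"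
  proof -
    have tq: "T 0 * sc Q = sc Q * T 0" by (rule sc_comm[symmetric])
    show ?thesis by (simp add: algebra_simps tq)
  qed
  also have "\<dots> = sc (inverse Q - Q) * T 0 + 1 + sc Q * T 0 - sc (inverse Q) * T 0 - sc (inverse Q * Q)"
    using tg0_quad[OF Q0, of q d] by (simp add: sc_mult)
  also have "\<dots> = sc ((inverse Q - Q) + Q - inverse Q) * T 0 + 1 - sc (inverse Q * Q)"
    by (simp add: sc_add sc_diff sc_zero algebra_simps)
  also have "\<dots> = 0"
  proof -
    have a: "(inverse Q - Q) + Q - inverse Q = 0" by simp
    have b: "inverse Q * Q = 1" using Q0 by simp
    show ?thesis unfolding a b sc_zero sc_one by simp
  qed
  finally show ?thesis .
qed

lemma global_R:
  "\<exists>rs. set rs \<subseteq> Rset q {inverse Q, - Q} d \<and> (\<forall>i\<in>{1..d}. peval (Pl rs) (K i) = 0)"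
proof -
  have "\<forall>i\<in>{1..d}. \<exists>P. splits (Rset q {inverse Q, - Q} i) P \<and> Zv UNIV {\<lambda>x. 0} (peval P (K i))"
  proof
    fix i assume "i \<in> {1..d}"
    then show "\<exists>P. splits (Rset q {inverse Q, - Q} i) P \<and> Zv UNIV {\<lambda>x. 0} (peval P (K i))"
      using jm[OF stable_UNIV stable_zero _ splits_Pl[of "[inverse Q, - Q]" "{inverse Q, - Q}"], of i]
        T0_quad_poly by (simp add: Zv_def app_zero)
  qed
  then obtain Pf where Pf: "\<forall>i\<in>{1..d}. splits (Rset q {inverse Q, - Q} i) (Pf i) \<and> peval (Pf i) (K i) = 0"
    using Zv_zero by metis
  define R where "R = prod_list (map Pf [1..<Suc d])"
  have "splits (Rset q {inverse Q, - Q} d) R"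
    unfolding R_def
  proof (rule splits_prod_list, intro ballI)
    fix p assume "p \<in> set (map Pf [1..<Suc d])"
    then obtain i where i0: "i \<in> set [1..<Suc d]" "p = Pf i" by (auto simp del: upt_Suc)
    then have i: "i \<in> {1..d}" "p = Pf i" by auto
    have "splits (Rset q {inverse Q, - Q} i) (Pf i)" using Pf i(1) by blast
    then show "splits (Rset q {inverse Q, - Q} d) p"
      using splits_mono[OF Rset_mono[of i d]] i by auto
  qed
  then obtain \<kappa> rs where k: "\<kappa> \<noteq> 0" "set rs \<subseteq> Rset q {inverse Q, - Q} d" "R = smult \<kappa> (Pl rs)"
    by (auto simp: splits_def)
  have all: "peval (Pl rs) (K i) = 0" if i: "i \<in> {1..d}" for i
  proof -
    have "i \<in> set [1..<Suc d]" using i by auto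
    then have "R = Pf i * prod_list (map Pf (remove1 i [1..<Suc d]))"
      unfolding R_def by (rule prod_list_map_remove1)
    then have "peval R (K i) = 0" using Pf i by (simp add: peval_mult)
    then have "sc \<kappa> * peval (Pl rs) (K i) = 0" using k by (simp add: peval_smult)
    then have "sc (inverse \<kappa>) * (sc \<kappa> * peval (Pl rs) (K i)) = 0" by simp
    then show ?thesis using k(1) by (simp add: mult.assoc[symmetric] sc_mult[symmetric] sc_one)
  qed
  show ?thesis
    by (rule exI[of _ rs]) (use k all in auto)
qed

end

locale proj = hk Q q d for Q q :: "'k::field" and d :: nat +
  fixes rs :: "'k::field list" and E :: "'k set" and a b :: "'k poly"
  assumes R0: "\<forall>i\<in>{1..d}. peval (Pl rs) (K i) = 0"
    and ab: "a * Pl (filter (\<lambda>x. x \<notin> E) rs) + b * Pl (filter (\<lambda>x. x \<in> E) rs) = 1"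
begin

abbreviation "gs \<equiv> filter (\<lambda>x. x \<notin> E) rs"
abbreviation "hs \<equiv> filter (\<lambda>x. x \<in> E) rs"

definition pi :: "nat \<Rightarrow> 'k lop" where "pi i = peval (a * Pl gs) (K i)"

lemma Rf: "Pl rs = Pl hs * Pl gs" using Pl_filter[of rs "\<lambda>x. x \<in> E"] by simp

lemma pp: "i \<in> {1..d} \<Longrightarrow>
    pi i * pi i = pi i \<and> peval (Pl hs) (K i) * pi i = 0 \<and>
    1 - pi i = peval (b * Pl hs) (K i) \<and> peval (Pl gs) (K i) * peval (b * Pl hs) (K i) = 0"
  unfolding pi_def using proj_props[OF _ ab Rf, of "K i"] R0 by blast

lemma pi_idem: "i \<in> {1..d} \<Longrightarrow> pi i * pi i = pi i" using pp by blast

lemma pi_comm: "i \<le> d \<Longrightarrow> k \<le> d \<Longrightarrow> pi i * pi k = pi k * pi i"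
proof -
  assume ik: "i \<le> d" "k \<le> d"
  have c1: "K i * K k = K k * K i" using KK ik by simp
  have "K i * pi k = pi k * K i" unfolding pi_def by (rule peval_comm[OF c1])
  then show ?thesis unfolding pi_def[of i] by (rule peval_comm[symmetric, OF sym])
qed

lemma pi_good: "i \<le> d \<Longrightarrow> pi i \<in> goodA"
  unfolding pi_def by (intro good_peval good_K)

lemma V1: "i \<in> {1..d} \<Longrightarrow> app (peval (Pl hs) (K i)) v = (\<lambda>x. 0) \<Longrightarrow> app (pi i) v = v"
proof -
  assume i: "i \<in> {1..d}" and h: "app (peval (Pl hs) (K i)) v = (\<lambda>x. 0)"
  have e: "1 - pi i = peval (b * Pl hs) (K i)" using pp[OF i] by blast
  have "app (peval (b * Pl hs) (K i)) v = (\<lambda>x. 0)"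
  proof -
    have "peval (b * Pl hs) (K i) = peval (Pl hs) (K i) * peval b (K i)"
      by (simp add: peval_mult peval_comm2)
    then show ?thesis by (simp add: app_times h app_fzero)
  qed
  then have "app (1 - pi i) v = (\<lambda>x. 0)" using e by simp
  then show ?thesis by (simp add: app_minus app_one fun_eq_iff)
qed

lemma V2: "i \<in> {1..d} \<Longrightarrow> app (pi i) v = v \<Longrightarrow> app (peval (Pl hs) (K i)) v = (\<lambda>x. 0)"
proof -
  assume i: "i \<in> {1..d}" and h: "app (pi i) v = v"
  have z: "peval (Pl hs) (K i) * pi i = 0" using pp[OF i] by blast
  have c: "pi i * peval (Pl hs) (K i) = peval (Pl hs) (K i) * pi i"
    unfolding pi_def by (rule peval_comm2)
  have "app (peval (Pl hs) (K i)) v = app (peval (Pl hs) (K i)) (app (pi i) v)" using h by simp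
  also have "\<dots> = app (pi i * peval (Pl hs) (K i)) v" by (simp add: app_times)
  also have "\<dots> = (\<lambda>x. 0)" using c z by (simp add: app_zero)
  finally show ?thesis .
qed

lemma V3:
  assumes i: "i \<in> {1..d}" and M: "stable M" and U: "stable U" and fs: "set fs \<subseteq> E"
    and Z: "Zv M U (peval (Pl fs) (K i))" and v: "v \<in> M"
  shows "app (1 - pi i) v \<in> U"
proof -
  define w where "w = app (1 - pi i) v"
  have gi: "K i \<in> goodA" using i by (intro good_K) auto
  have e: "1 - pi i = peval (b * Pl hs) (K i)" using pp[OF i] by blast
  have g1: "1 - pi i \<in> goodA" using pi_good[of i] i good_one good_minus by auto
  have wM: "w \<in> M" unfolding w_def by (rule good_app[OF g1 M v])
  have wG: "app (peval (Pl gs) (K i)) w = (\<lambda>x. 0)"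
  proof -
    have z: "peval (Pl gs) (K i) * peval (b * Pl hs) (K i) = 0" using pp[OF i] by blast
    have "peval (b * Pl hs) (K i) * peval (Pl gs) (K i) = 0"
      using z peval_comm2 by metis
    then show ?thesis unfolding w_def e by (simp add: app_times[symmetric] app_zero)
  qed
  have disj: "set fs \<inter> set gs = {}" using fs by auto
  obtain c e' where ce: "c * Pl fs + e' * Pl gs = 1" using cop_Pl[OF disj] by (auto simp: cop_def)
  have "w = app (peval (c * Pl fs + e' * Pl gs) (K i)) w" using ce by (simp add: peval_one app_one)
  also have "\<dots> = (\<lambda>x. app (peval c (K i)) (app (peval (Pl fs) (K i)) w) x +
                       app (peval e' (K i)) (app (peval (Pl gs) (K i)) w) x)"
  proof -
    have "peval (c * Pl fs + e' * Pl gs) (K i) = peval (Pl fs) (K i) * peval c (K i) + peval (Pl gs) (K i) * peval e' (K i)"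
      by (simp add: peval_add peval_mult peval_comm2)
    then show ?thesis by (simp add: app_plus app_times)
  qed
  also have "\<dots> = app (peval c (K i)) (app (peval (Pl fs) (K i)) w)"
    using wG by (simp add: app_fzero)
  finally have wc: "w = app (peval c (K i)) (app (peval (Pl fs) (K i)) w)" .
  have "app (peval (Pl fs) (K i)) w \<in> U" using Z wM by (simp add: Zv_def)
  then have "app (peval c (K i)) (app (peval (Pl fs) (K i)) w) \<in> U"
    using good_app[OF good_peval[OF gi] U] by blast
  then show ?thesis using wc unfolding w_def by simp
qed

primrec Pm :: "nat \<Rightarrow> 'k lop" where
  "Pm 0 = 1"
| "Pm (Suc m) = Pm m * pi (Suc m)"

lemma Pm_good: "m \<le> d \<Longrightarrow> Pm m \<in> goodA"
  by (induction m) (auto simp: good_one pi_good intro: goodA.gM)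

lemma Pm_comm_pi: "m \<le> d \<Longrightarrow> i \<le> d \<Longrightarrow> Pm m * pi i = pi i * Pm m"
proof (induction m)
  case 0 then show ?case by simp
next
  case (Suc m)
  have c: "pi (Suc m) * pi i = pi i * pi (Suc m)" using pi_comm Suc.prems by simp
  have "Pm (Suc m) * pi i = Pm m * (pi (Suc m) * pi i)" by (simp add: mult.assoc)
  also have "\<dots> = (Pm m * pi i) * pi (Suc m)" using c by (simp add: mult.assoc)
  also have "\<dots> = pi i * Pm (Suc m)" using Suc by (simp add: mult.assoc)
  finally show ?case .
qed

lemma Pm_idem: "m \<le> d \<Longrightarrow> Pm m * Pm m = Pm m"
proof (induction m)
  case 0 then show ?case by simp
next
  case (Suc m)
  have c: "pi (Suc m) * Pm m = Pm m * pi (Suc m)" using Pm_comm_pi[of m "Suc m"] Suc.prems by simp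
  have "Pm (Suc m) * Pm (Suc m) = Pm m * (pi (Suc m) * Pm m) * pi (Suc m)" by (simp add: mult.assoc)
  also have "\<dots> = (Pm m * Pm m) * (pi (Suc m) * pi (Suc m))" using c by (simp add: mult.assoc)
  also have "\<dots> = Pm (Suc m)" using Suc pi_idem[of "Suc m"] by simp
  finally show ?case .
qed

lemma Pm_absorb: "1 \<le> i \<Longrightarrow> i \<le> m \<Longrightarrow> m \<le> d \<Longrightarrow> Pm m * pi i = Pm m"
proof (induction m)
  case 0 then show ?case by simp
next
  case (Suc m)
  show ?case
  proof (cases "i = Suc m")
    case True
    then show ?thesis using pi_idem[of "Suc m"] Suc.prems by (simp add: mult.assoc)
  next
    case False
    have c: "pi (Suc m) * pi i = pi i * pi (Suc m)" using pi_comm Suc.prems by simp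
    have "Pm (Suc m) * pi i = (Pm m * pi i) * pi (Suc m)" using c by (simp add: mult.assoc)
    also have "\<dots> = Pm (Suc m)" using Suc False by simp
    finally show ?thesis .
  qed
qed

lemma Pm_fix: "m \<le> d \<Longrightarrow> app (Pm m) v = v \<longleftrightarrow> (\<forall>i\<in>{1..m}. app (pi i) v = v)"
proof
  assume m: "m \<le> d" and h: "app (Pm m) v = v"
  show "\<forall>i\<in>{1..m}. app (pi i) v = v"
  proof
    fix i assume i: "i \<in> {1..m}"
    have "app (pi i) v = app (pi i) (app (Pm m) v)" using h by simp
    also have "\<dots> = app (Pm m * pi i) v" by (simp add: app_times)
    also have "\<dots> = v" using Pm_absorb[of i m] i m h by simp
    finally show "app (pi i) v = v" .
  qed
next
  assume m: "m \<le> d" and h: "\<forall>i\<in>{1..m}. app (pi i) v = v"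
  then show "app (Pm m) v = v"
  proof (induction m)
    case 0 then show ?case by (simp add: app_one)
  next
    case (Suc m)
    then show ?case by (simp add: app_times)
  qed
qed

lemma Pm_tele:
  assumes M: "stable M" and U: "stable U"
    and h: "\<forall>i\<in>{1..d}. \<forall>v\<in>M. app (1 - pi i) v \<in> U"
  shows "m \<le> d \<Longrightarrow> v \<in> M \<Longrightarrow> app (1 - Pm m) v \<in> U"
proof (induction m arbitrary: v)
  case 0
  then show ?case using U by (simp add: app_zero stable_def)
next
  case (Suc m)
  have wM: "app (Pm m) v \<in> M" using good_app[OF Pm_good M] Suc by simp
  have a: "app (1 - Pm m) v \<in> U" using Suc by simp
  have b: "app (1 - pi (Suc m)) (app (Pm m) v) \<in> U" using h wM Suc.prems by simp
  have "app (1 - Pm (Suc m)) v = (\<lambda>x. app (1 - Pm m) v x + app (1 - pi (Suc m)) (app (Pm m) v) x)"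
    by (simp add: app_minus app_one app_times fun_eq_iff)
  then show ?case using a b U by (simp add: stable_def)
qed

lemma Pm_comm_T: "j < d \<Longrightarrow> T j * Pm d = Pm d * T j"
proof (cases j)
  case 0
  have "m \<le> d \<Longrightarrow> T 0 * Pm m = Pm m * T 0" for m
  proof (induction m)
    case 0 then show ?case by simp
  next
    case (Suc m)
    have "T 0 * K (Suc m) = K (Suc m) * T 0" using T0K Suc.prems by blast
    then have c: "T 0 * pi (Suc m) = pi (Suc m) * T 0" unfolding pi_def by (rule peval_comm)
    show ?case using Suc c by (simp add: mult.assoc[symmetric]) (simp add: mult.assoc)
  qed
  then show ?thesis using 0 by simp
next
  case (Suc j')
  assume jd: "j < d"
  have j1: "1 \<le> j" using Suc by simp
  define X where "X = K j"
  define Y where "Y = K (Suc j)"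
  have yY: "Y = T j * X * T j" unfolding X_def Y_def using KS[OF j1] .
  have quad: "T j * T j = sc (inverse q - q) * T j + 1" unfolding Suc by (rule tgS_quad[OF q0])
  have xy: "X * Y = Y * X" unfolding X_def Y_def by (rule KK) (use jd in simp_all)
  have cT: "T j * sc (inverse q - q) = sc (inverse q - q) * T j" and cX: "X * sc (inverse q - q) = sc (inverse q - q) * X"
    and cY: "Y * sc (inverse q - q) = sc (inverse q - q) * Y" by (simp_all add: sc_comm)
  note ps = pair_sym[OF quad yY xy cT cX cY]
  have pair: "T j * (pi j * pi (Suc j)) = (pi j * pi (Suc j)) * T j"
    unfolding pi_def X_def[symmetric] Y_def[symmetric] by (rule sym_prod[OF ps xy])
  have claim: "\<forall>m. m \<le> d \<longrightarrow> m \<noteq> j \<longrightarrow> T j * Pm m = Pm m * T j"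
  proof (intro allI)
    fix m show "m \<le> d \<longrightarrow> m \<noteq> j \<longrightarrow> T j * Pm m = Pm m * T j"
    proof (induction m rule: less_induct)
      case (less m)
      show ?case
      proof (intro impI)
        assume md: "m \<le> d" and mj: "m \<noteq> j"
        show "T j * Pm m = Pm m * T j"
        proof (cases m)
          case 0 then show ?thesis by simp
        next
          case (Suc m')
          consider "Suc m' < j" | "Suc m' = Suc j" | "Suc j < Suc m'" using mj Suc by linarith
          then show ?thesis
          proof cases
            case 1
            have ih: "T j * Pm m' = Pm m' * T j" using less Suc md 1 by simp
            have "T j * K (Suc m') = K (Suc m') * T j" using TK_far[of "Suc m'" j] 1 jd by simp
            then have c: "T j * pi (Suc m') = pi (Suc m') * T j" unfolding pi_def by (rule peval_comm)
            show ?thesis using ih c Suc by (simp add: mult.assoc[symmetric]) (simp add: mult.assoc)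
          next
            case 2
            have mm: "m = Suc j" using 2 Suc by simp
            have ih: "T j * Pm j' = Pm j' * T j" using less mm md \<open>j = Suc j'\<close> by simp
            have e: "Pm m = Pm j' * (pi j * pi (Suc j))" using mm \<open>j = Suc j'\<close> by (simp add: mult.assoc)
            show ?thesis unfolding e using ih pair by (simp add: mult.assoc[symmetric]) (simp add: mult.assoc)
          next
            case 3
            have ih: "T j * Pm m' = Pm m' * T j" using less Suc md 3 by simp
            have "T j * K (Suc m') = K (Suc m') * T j" using TK_low[of j "Suc m'"] 3 md Suc by simp
            then have c: "T j * pi (Suc m') = pi (Suc m') * T j" unfolding pi_def by (rule peval_comm)
            show ?thesis using ih c Suc by (simp add: mult.assoc[symmetric]) (simp add: mult.assoc)
          qed
        qed
      qed
    qed
  qed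
  then show ?thesis using jd by simp
qed

end

context hk
begin

lemma Tens_stable: "stable (Tens n d)"
  unfolding stable_def
proof (intro conjI ballI allI impI)
  show "(\<lambda>x. 0) \<in> Tens n d" by (simp add: Tens_def)
next
  fix v :: "int list \<Rightarrow> 'k" and j assume "v \<in> Tens n d" "j < d"
  then show "app (T j) v \<in> Tens n d" by (rule tg_Tens)
next
  fix v w :: "int list \<Rightarrow> 'k" assume "v \<in> Tens n d" "w \<in> Tens n d"
  then show "(\<lambda>x. v x + w x) \<in> Tens n d" by (simp add: Tens_def)
next
  fix c :: 'k and v :: "int list \<Rightarrow> 'k" assume "v \<in> Tens n d"
  then show "(\<lambda>x. c * v x) \<in> Tens n d" by (simp add: Tens_def)
qed

lemma submodule_stable: "submodule Q q d n S \<Longrightarrow> stable S"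
proof -
  assume s: "submodule Q q d n S"
  then have sub: "S \<subseteq> Tens n d" by (simp add: submodule_def)
  have "\<forall>v\<in>S. \<forall>j<d. app (T j) v \<in> S"
  proof (intro ballI allI impI)
    fix v j assume v: "v \<in> S" and j: "j < d"
    then have "act Q q n d j v \<in> S" using s by (simp add: submodule_def)
    moreover have "act Q q n d j v = app (T j) v" using act_eq[OF _ j] v sub by blast
    ultimately show "app (T j) v \<in> S" by simp
  qed
  then show ?thesis using s by (simp add: stable_def submodule_def)
qed

lemma hom_good:
  assumes A: "A \<in> goodA" and phi: "\<phi> \<in> HomH Q q d n m"
  shows "f \<in> Tens n d \<Longrightarrow> \<phi> (app A f) = app A (\<phi> f)"
  using A
proof (induction A arbitrary: f rule: goodA.induct)
  case (gT j)
  have pf: "\<phi> f \<in> Tens m d" using phi gT by (simp add: HomH_def)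
  have "\<phi> (act Q q n d j f) = act Q q m d j (\<phi> f)" using phi gT unfolding HomH_def by blast
  then show ?case using act_eq[OF gT(2) gT(1)] act_eq[OF pf gT(1)] by simp
next
  case (gS c)
  then show ?case using phi by (simp add: HomH_def app_sc)
next
  case (gP A B)
  have "app A f \<in> Tens n d" "app B f \<in> Tens n d"
    using good_app[OF _ Tens_stable] gP by auto
  then show ?case using phi gP by (simp add: HomH_def app_plus)
next
  case (gM A B)
  have "app A f \<in> Tens n d" using good_app[OF _ Tens_stable] gM by auto
  then show ?case using gM by (simp add: app_times)
qed

lemma hom_zero: "\<phi> \<in> HomH Q q d n m \<Longrightarrow> \<phi> (\<lambda>x. 0) = (\<lambda>x. 0)"
proof -
  assume phi: "\<phi> \<in> HomH Q q d n m"
  have z: "(\<lambda>x. 0) \<in> Tens n d" by (simp add: Tens_def)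
  have h: "\<forall>c. \<forall>f\<in>Tens n d. \<phi> (\<lambda>w. c * f w) = (\<lambda>w. c * \<phi> f w)" using phi by (simp add: HomH_def)
  show ?thesis using h[rule_format, OF z, of 0] by simp
qed

lemma comm_K:
  assumes c: "\<forall>j<d. B * T j = T j * B"
  shows "i \<le> d \<Longrightarrow> B * K i = K i * B"
proof (induction i)
  case 0 then show ?case by simp
next
  case (Suc i)
  show ?case
  proof (cases "i = 0")
    case True then show ?thesis using c Suc.prems by simp
  next
    case False
    have ci: "B * T i = T i * B" using c Suc.prems by simp
    have ih: "B * K i = K i * B" using Suc by simp
    have "B * K (Suc i) = (B * T i) * K i * T i" using False by (simp add: mult.assoc)
    also have "\<dots> = T i * (B * K i) * T i" using ci by (simp add: mult.assoc)
    also have "\<dots> = T i * K i * (B * T i)" using ih by (simp add: mult.assoc)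
    also have "\<dots> = K (Suc i) * B" using ci False by (simp add: mult.assoc)
    finally show ?thesis .
  qed
qed

lemma eig_root:
  assumes Z: "Zv M {\<lambda>x. 0} (peval P A)" and S: "splits S P" and v: "v \<in> M" "v \<noteq> (\<lambda>x. 0)"
    and ev: "app A v = (\<lambda>w. e * v w)"
  shows "e \<in> S"
proof -
  obtain \<kappa> fs where k: "\<kappa> \<noteq> 0" "set fs \<subseteq> S" "P = smult \<kappa> (Pl fs)" using S by (auto simp: splits_def)
  have "app (peval P A) v = (\<lambda>w. poly P e * v w)" by (rule peval_eig[OF ev])
  moreover have "app (peval P A) v = (\<lambda>x. 0)" using Z v by (simp add: Zv_def)
  ultimately have "(\<lambda>w. poly P e * v w) = (\<lambda>x. 0)" by simp
  moreover obtain w where "v w \<noteq> 0" using v(2) by auto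
  ultimately have "poly P e = 0" by (metis mult_eq_0_iff)
  then have "poly (Pl fs) e = 0" using k by simp
  then show ?thesis using k poly_Pl_zero by auto
qed

lemma quad_vec:
  "app (T 0 + sc Q) (app (T 0 - sc (inverse Q)) v) = (\<lambda>x. 0)"
  "app (T 0 - sc (inverse Q)) (app (T 0 + sc Q) v) = (\<lambda>x. 0)"
proof -
  have pl: "Pl [inverse Q, - Q] = [:- inverse Q, 1:] * [:- (- Q), 1:]" by (simp add: Pl_def)
  have z: "(T 0 - sc (inverse Q)) * (T 0 + sc Q) = 0"
    using T0_quad_poly unfolding pl peval_mult peval_lin by (simp add: sc_minus)
  have l1: "peval [:- inverse Q, 1:] (T 0) = T 0 - sc (inverse Q)" by (rule peval_lin)
  have l2: "peval [:Q, 1:] (T 0) = T 0 + sc Q" using peval_lin[of "- Q" "T 0"] by (simp add: sc_minus)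
  have c: "(T 0 - sc (inverse Q)) * (T 0 + sc Q) = (T 0 + sc Q) * (T 0 - sc (inverse Q))"
    using peval_comm2[of "[:- inverse Q, 1:]" "T 0" "[:Q, 1:]"] unfolding l1 l2 .
  show "app (T 0 + sc Q) (app (T 0 - sc (inverse Q)) v) = (\<lambda>x. 0)"
    using z by (simp add: app_times[symmetric] app_zero)
  show "app (T 0 - sc (inverse Q)) (app (T 0 + sc Q) v) = (\<lambda>x. 0)"
    using z c by (simp add: app_times[symmetric] app_zero)
qed

lemma minus_eig_R: "minus_eig Q q i = Rset q {- Q} i"
  unfolding minus_eig_def Rset_def by auto

lemma plus_eig_R: "plus_eig Q q i = Rset q {inverse Q} i"
  unfolding plus_eig_def Rset_def by auto

end

lemma fd_facts:
  fixes Q q :: "'k::field"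
  assumes Q0: "Q \<noteq> 0" and q0: "q \<noteq> 0" and fd: "f_d d Q q \<noteq> 0"
  shows "inverse Q \<notin> minus_eig Q q d" and "- Q \<notin> plus_eig Q q d"
proof -
  have fac: "Q powi (-2) + q powi (2 * i) \<noteq> 0" if "\<bar>i\<bar> < int d" for i
  proof -
    have "i \<in> {1 - int d..int d - 1}" using that by auto
    then show ?thesis using fd by (auto simp: f_d_def)
  qed
  have Qm2: "Q powi (-2) = inverse Q * inverse Q"
    by (simp add: power_int_minus power2_eq_square)
  show "inverse Q \<notin> minus_eig Q q d"
  proof
    assume "inverse Q \<in> minus_eig Q q d"
    then obtain j where j: "\<bar>j\<bar> < int d" "inverse Q = - Q * q powi (2 * j)" by (auto simp: minus_eig_def)
    have "Q powi (-2) = inverse Q * (- Q * q powi (2 * j))" using Qm2 j(2) by simp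
    also have "\<dots> = - (q powi (2 * j))" using Q0 by simp
    finally show False using fac[OF j(1)] by simp
  qed
  show "- Q \<notin> plus_eig Q q d"
  proof
    assume "- Q \<in> plus_eig Q q d"
    then obtain j where j: "\<bar>j\<bar> < int d" "- Q = inverse Q * q powi (2 * j)" by (auto simp: plus_eig_def)
    have j': "\<bar>- j\<bar> < int d" using j by simp
    have qq: "q powi (2 * j) * q powi (2 * (- j)) = 1" using q0 by (simp add: power_int_add[symmetric])
    have "Q powi (-2) = inverse Q * inverse Q" by (rule Qm2)
    also have "\<dots> = inverse Q * inverse Q * (q powi (2 * j) * q powi (2 * (- j)))" using qq by simp
    also have "\<dots> = inverse Q * (inverse Q * q powi (2 * j)) * q powi (2 * (- j))" by (simp add: mult.assoc)
    also have "\<dots> = - (q powi (2 * (- j)))" using j(2)[symmetric] Q0 by simp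
    finally show False using fac[OF j'] by simp
  qed
qed

context proj
begin

abbreviation P where "P \<equiv> Pm d"

lemma P_good: "P \<in> goodA" by (rule Pm_good) simp

lemma P_idem: "P * P = P" by (rule Pm_idem) simp

lemma P_T: "j < d \<Longrightarrow> P * T j = T j * P" using Pm_comm_T[of j] by simp

lemma P_K: "i \<le> d \<Longrightarrow> P * K i = K i * P"
  by (rule comm_K) (use P_T in auto)

lemma P_Tens: "f \<in> Tens n d \<Longrightarrow> app P f \<in> Tens n d"
  by (rule good_app[OF P_good Tens_stable])

lemma P_app_T: "j < d \<Longrightarrow> app P (app (T j) f) = app (T j) (app P f)"
  using P_T[of j] by (metis app_times)

lemma P_app_K: "i \<le> d \<Longrightarrow> app P (app (K i) f) = app (K i) (app P f)"
  using P_K[of i] by (metis app_times)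

lemma P_app_idem: "app P (app P f) = app P f"
  using P_idem by (metis app_times)

lemma natidem: "natural_idempotent Q q d (\<lambda>n. app P)"
  unfolding natural_idempotent_def
proof (intro conjI allI ballI)
  fix n
  show "app P \<in> HomH Q q d n n"
    unfolding HomH_def
  proof (intro CollectI conjI ballI allI impI)
    fix f :: "int list \<Rightarrow> 'k" assume f: "f \<in> Tens n d"
    show "app P f \<in> Tens n d" using P_Tens[OF f] .
    fix j assume j: "j < d"
    show "app P (act Q q n d j f) = act Q q n d j (app P f)"
      using act_eq[OF f j] act_eq[OF P_Tens[OF f] j] P_app_T[OF j] by simp
  next
    fix f g :: "int list \<Rightarrow> 'k"
    show "app P (\<lambda>w. f w + g w) = (\<lambda>w. app P f w + app P g w)" by (rule app_add)
  next
    fix c and f :: "int list \<Rightarrow> 'k"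
    show "app P (\<lambda>w. c * f w) = (\<lambda>w. c * app P f w)" by (rule app_smult)
  qed
  fix f :: "int list \<Rightarrow> 'k"
  show "app P (app P f) = app P f" by (rule P_app_idem)
next
  fix n m \<phi> and f :: "int list \<Rightarrow> 'k"
  assume "\<phi> \<in> HomH Q q d n m" "f \<in> Tens n d"
  then show "\<phi> (app P f) = app P (\<phi> f)" by (rule hom_good[OF P_good])
qed

lemma img_char: "app P ` Tens n d = {f \<in> Tens n d. app P f = f}"
proof
  show "app P ` Tens n d \<subseteq> {f \<in> Tens n d. app P f = f}"
    using P_Tens P_app_idem by auto
  show "{f \<in> Tens n d. app P f = f} \<subseteq> app P ` Tens n d"
    by (auto intro: image_eqI[where x = "\<lambda>x. 0"] rev_image_eqI)
qed

lemma fix_stable: "stable {f \<in> Tens n d. app P f = f}"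
proof -
  have ts: "stable (Tens n d)" by (rule Tens_stable)
  show ?thesis unfolding stable_def
  proof (intro conjI ballI allI impI)
    show "(\<lambda>x. 0) \<in> {f \<in> Tens n d. app P f = f}" using ts by (simp add: stable_def app_fzero)
  next
    fix v :: "int list \<Rightarrow> 'k" and j assume v: "v \<in> {f \<in> Tens n d. app P f = f}" and j: "j < d"
    then show "app (T j) v \<in> {f \<in> Tens n d. app P f = f}"
      using tg_Tens P_app_T by auto
  next
    fix v w :: "int list \<Rightarrow> 'k" assume "v \<in> {f \<in> Tens n d. app P f = f}" "w \<in> {f \<in> Tens n d. app P f = f}"
    then show "(\<lambda>x. v x + w x) \<in> {f \<in> Tens n d. app P f = f}"
      using ts by (simp add: stable_def app_add)
  next
    fix c :: 'k and v :: "int list \<Rightarrow> 'k" assume "v \<in> {f \<in> Tens n d. app P f = f}"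
    then show "(\<lambda>x. c * v x) \<in> {f \<in> Tens n d. app P f = f}"
      using ts by (simp add: stable_def app_smult)
  qed
qed

lemma comm_T0_peval: "(T 0 + sc c) * peval h (T 0) = peval h (T 0) * (T 0 + sc c)"
proof -
  have "(T 0 + sc c) * T 0 = T 0 * (T 0 + sc c)" by (simp add: algebra_simps sc_comm)
  then show ?thesis by (rule peval_comm)
qed

lemma kill_T0:
  assumes "app (T 0) w = (\<lambda>x. s * w x)" and "poly h s \<noteq> 0"
    and "app (peval h (T 0)) w = (\<lambda>x. 0)"
  shows "w = (\<lambda>x. 0)"
proof -
  have "app (peval h (T 0)) w = (\<lambda>x. poly h s * w x)" by (rule peval_eig[OF assms(1)])
  then show ?thesis using assms(2,3) by (auto simp: fun_eq_iff)
qed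

lemma peval_Pl1: "peval (Pl [r]) A = A - sc r"
  by (simp add: Pl_def peval_lin)

end

context proj
begin

lemma minus_part:
  assumes E: "E = minus_eig Q q d" and F1: "inverse Q \<notin> minus_eig Q q d"
  shows "\<exists>S. is_tensor_minus Q q d S \<and> summand_sub Q q d S"
proof -
  define S where "S n = {f \<in> Tens n d. app P f = f}" for n
  have Sst: "stable (S n)" for n unfolding S_def by (rule fix_stable)
  have PlQ: "peval (Pl [- Q]) (T 0) = T 0 + sc Q" by (simp add: peval_Pl1 sc_minus)
  have hsE: "set hs \<subseteq> minus_eig Q q d" using E by auto
  have polyhs: "poly (Pl hs) (inverse Q) \<noteq> 0" using hsE F1 poly_Pl_zero[of hs "inverse Q"] by blast
  have base: "Zv (S n) {\<lambda>x. 0} (peval (Pl [- Q]) (T 0))" if d1: "1 \<le> d" for n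
    unfolding Zv_def PlQ
  proof
    fix v assume v: "v \<in> S n"
    have "app (pi 1) v = v" using v Pm_fix[of d v] d1 unfolding S_def by auto
    then have h0: "app (peval (Pl hs) (T 0)) v = (\<lambda>x. 0)" using V2[of 1 v] d1 by simp
    define w where "w = app (T 0 + sc Q) v"
    have ew: "app (T 0) w = (\<lambda>x. inverse Q * w x)"
      using quad_vec(2)[of v] unfolding w_def by (simp add: app_minus app_sc fun_eq_iff)
    have "app (peval (Pl hs) (T 0)) w = app (T 0 + sc Q) (app (peval (Pl hs) (T 0)) v)"
      unfolding w_def using comm_T0_peval[of Q "Pl hs"] by (metis app_times)
    also have "\<dots> = (\<lambda>x. 0)" using h0 by (simp add: app_fzero)
    finally have "w = (\<lambda>x. 0)" using kill_T0[OF ew polyhs] by simp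
    then show "app (T 0 + sc Q) v \<in> {\<lambda>x. 0}" unfolding w_def by simp
  qed
  have mp: "minus_prop Q q d S"
    unfolding minus_prop_def subfunctor_def
  proof (intro conjI allI ballI)
    fix n
    show "submodule Q q d n (S n)"
      unfolding submodule_def
    proof (intro conjI allI ballI impI)
      show "S n \<subseteq> Tens n d" unfolding S_def by auto
      show "(\<lambda>w. 0) \<in> S n" using Sst[of n] by (simp add: stable_def)
      fix f g assume "f \<in> S n" "g \<in> S n"
      then show "(\<lambda>w. f w + g w) \<in> S n" using Sst[of n] by (simp add: stable_def)
    next
      fix c f assume "f \<in> S n"
      then show "(\<lambda>w. c * f w) \<in> S n" using Sst[of n] by (simp add: stable_def)
    next
      fix j f assume j: "j < d" and f: "f \<in> S n"
      have "act Q q n d j f = app (T j) f" using act_eq[OF _ j] f unfolding S_def by auto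
      then show "act Q q n d j f \<in> S n" using Sst[of n] f j by (simp add: stable_def)
    qed
  next
    fix n m \<phi> assume phi: "\<phi> \<in> HomH Q q d n m"
    show "\<phi> ` S n \<subseteq> S m"
    proof
      fix g assume "g \<in> \<phi> ` S n"
      then obtain f where f: "f \<in> S n" "g = \<phi> f" by auto
      have ft: "f \<in> Tens n d" using f unfolding S_def by auto
      have "\<phi> f \<in> Tens m d" using phi ft by (simp add: HomH_def)
      moreover have "app P (\<phi> f) = \<phi> f" using hom_good[OF P_good phi ft] f unfolding S_def by simp
      ultimately show "g \<in> S m" using f unfolding S_def by simp
    qed
  next
    fix n i assume i: "i \<in> {1..d}"
    show "sub_eigs_in Q q d n (S n) i (minus_eig Q q i)"
      unfolding sub_eigs_in_def
    proof (intro ballI allI impI)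
      fix f e assume f: "f \<in> S n" and h: "f \<noteq> (\<lambda>w. 0) \<and> Kact Q q n d i f = (\<lambda>w. e * f w)"
      have ft: "f \<in> Tens n d" using f unfolding S_def by auto
      have ev: "app (K i) f = (\<lambda>w. e * f w)" using h Kact_eq[OF ft, of i Q q] i by simp
      obtain Pp where Pp: "splits (Rset q {- Q} i) Pp" "Zv (S n) {\<lambda>x. 0} (peval Pp (K i))"
        using jm[OF Sst stable_zero base splits_Pl[of "[- Q]" "{- Q}"], of i] i by auto
      have "e \<in> Rset q {- Q} i" by (rule eig_root[OF Pp(2) Pp(1) f]) (use h ev in auto)
      then show "e \<in> minus_eig Q q i" by (simp add: minus_eig_R)
    qed
  qed
  have maxi: "\<forall>S'. minus_prop Q q d S' \<longrightarrow> (\<forall>n. S' n \<subseteq> S n)"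
  proof (intro allI impI subsetI)
    fix S' n f assume mp': "minus_prop Q q d S'" and f: "f \<in> S' n"
    have sm: "submodule Q q d n (S' n)" using mp' by (simp add: minus_prop_def subfunctor_def)
    have st: "stable (S' n)" by (rule submodule_stable[OF sm])
    have ft: "f \<in> Tens n d" using sm f by (auto simp: submodule_def)
    have "app (pi i) f = f" if i: "i \<in> {1..d}" for i
    proof -
      have d1: "1 \<le> d" using i by simp
      have eig1: "sub_eigs_in Q q d n (S' n) 1 (minus_eig Q q 1)" using mp' d1 by (simp add: minus_prop_def)
      have base': "Zv (S' n) {\<lambda>x. 0} (peval (Pl [- Q]) (T 0))"
        unfolding Zv_def PlQ
      proof
        fix v assume v: "v \<in> S' n"
        define w where "w = app (T 0 + sc Q) v"
        have gT: "T 0 + sc Q \<in> goodA" using d1 by (intro goodA.intros) auto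
        have wS: "w \<in> S' n" unfolding w_def by (rule good_app[OF gT st v])
        have wt: "w \<in> Tens n d" using sm wS by (auto simp: submodule_def)
        have ew: "app (T 0) w = (\<lambda>x. inverse Q * w x)"
          using quad_vec(2)[of v] unfolding w_def by (simp add: app_minus app_sc fun_eq_iff)
        have "Kact Q q n d 1 w = (\<lambda>x. inverse Q * w x)" using Kact_eq[OF wt, of 1 Q q] d1 ew by simp
        moreover have "inverse Q \<notin> minus_eig Q q 1"
          using F1 Rset_mono[of 1 d q "{- Q}"] d1 by (auto simp: minus_eig_R)
        ultimately have "w = (\<lambda>x. 0)" using eig1 wS unfolding sub_eigs_in_def by blast
        then show "app (T 0 + sc Q) v \<in> {\<lambda>x. 0}" unfolding w_def by simp
      qed
      obtain Pp where Pp: "splits (Rset q {- Q} i) Pp" "Zv (S' n) {\<lambda>x. 0} (peval Pp (K i))"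
        using jm[OF st stable_zero base' splits_Pl[of "[- Q]" "{- Q}"], of i] i by auto
      obtain \<kappa> fs where k: "\<kappa> \<noteq> 0" "set fs \<subseteq> Rset q {- Q} i" "Pp = smult \<kappa> (Pl fs)"
        using Pp(1) by (auto simp: splits_def)
      have Zf: "Zv (S' n) {\<lambda>x. 0} (peval (Pl fs) (K i))"
        using Z_unsc[OF stable_zero k(1)] Pp(2) k(3) by (simp add: peval_smult)
      have fsE: "set fs \<subseteq> E" using k(2) Rset_mono[of i d q "{- Q}"] i E by (auto simp: minus_eig_R)
      have "app (1 - pi i) f \<in> {\<lambda>x. 0}" by (rule V3[OF i st stable_zero fsE Zf f])
      then show ?thesis by (simp add: app_minus app_one fun_eq_iff)
    qed
    then have "app P f = f" using Pm_fix[of d f] by simp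
    then show "f \<in> S n" using ft unfolding S_def by simp
  qed
  have "summand_sub Q q d S"
    unfolding summand_sub_def using natidem img_char unfolding S_def by blast
  then show ?thesis using mp maxi unfolding is_tensor_minus_def by blast
qed

end

context proj
begin

lemma plus_part:
  assumes E: "E = plus_eig Q q d" and F2: "- Q \<notin> plus_eig Q q d"
  shows "\<exists>U. is_tensor_plus_kernel Q q d U \<and> summand_quot Q q d U"
proof -
  define U where "U n = {f \<in> Tens n d. app P f = (\<lambda>x. 0)}" for n
  define A where "A n = {f \<in> Tens n d. app P f = f}" for n
  have Ast: "stable (A n)" for n unfolding A_def by (rule fix_stable)
  have PlQ: "peval (Pl [inverse Q]) (T 0) = T 0 - sc (inverse Q)" by (simp add: peval_Pl1)
  have hsE: "set hs \<subseteq> plus_eig Q q d" using E by auto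
  have polyhs: "poly (Pl hs) (- Q) \<noteq> 0" using hsE F2 poly_Pl_zero[of hs "- Q"] by blast
  have base: "Zv (A n) {\<lambda>x. 0} (peval (Pl [inverse Q]) (T 0))" if d1: "1 \<le> d" for n
    unfolding Zv_def PlQ
  proof
    fix v assume v: "v \<in> A n"
    have "app (pi 1) v = v" using v Pm_fix[of d v] d1 unfolding A_def by auto
    then have h0: "app (peval (Pl hs) (T 0)) v = (\<lambda>x. 0)" using V2[of 1 v] d1 by simp
    define w where "w = app (T 0 - sc (inverse Q)) v"
    have ew: "app (T 0) w = (\<lambda>x. (- Q) * w x)"
      using quad_vec(1)[of v] unfolding w_def by (simp add: app_plus app_sc fun_eq_iff eq_neg_iff_add_eq_0)
    have "app (peval (Pl hs) (T 0)) w = app (T 0 + sc (- inverse Q)) (app (peval (Pl hs) (T 0)) v)"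
      unfolding w_def using comm_T0_peval[of "- inverse Q" "Pl hs"] by (metis app_times sc_minus diff_conv_add_uminus)
    also have "\<dots> = (\<lambda>x. 0)" using h0 by (simp add: app_fzero)
    finally have "w = (\<lambda>x. 0)" using kill_T0[OF ew polyhs] by simp
    then show "app (T 0 - sc (inverse Q)) v \<in> {\<lambda>x. 0}" unfolding w_def by simp
  qed
  have Ust: "submodule Q q d n (U n)" for n
    unfolding submodule_def
  proof (intro conjI allI ballI impI)
    show "U n \<subseteq> Tens n d" unfolding U_def by auto
    show "(\<lambda>w. 0) \<in> U n" unfolding U_def using Tens_stable[of n] by (simp add: stable_def app_fzero)
    fix f g assume "f \<in> U n" "g \<in> U n"
    then show "(\<lambda>w. f w + g w) \<in> U n" unfolding U_def using Tens_stable[of n]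
      by (simp add: stable_def app_add)
  next
    fix c f assume "f \<in> U n"
    then show "(\<lambda>w. c * f w) \<in> U n" unfolding U_def using Tens_stable[of n]
      by (simp add: stable_def app_smult)
  next
    fix j f assume j: "j < d" and f: "f \<in> U n"
    have ft: "f \<in> Tens n d" using f unfolding U_def by auto
    have "act Q q n d j f = app (T j) f" using act_eq[OF ft j] .
    moreover have "app (T j) f \<in> Tens n d" using tg_Tens[OF ft j] .
    moreover have "app P (app (T j) f) = (\<lambda>x. 0)" using P_app_T[OF j] f unfolding U_def by (simp add: app_fzero)
    ultimately show "act Q q n d j f \<in> U n" unfolding U_def by simp
  qed
  have pp: "plus_prop Q q d U"
    unfolding plus_prop_def subfunctor_def
  proof (intro conjI allI ballI)
    fix n show "submodule Q q d n (U n)" by (rule Ust)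
  next
    fix n m \<phi> assume phi: "\<phi> \<in> HomH Q q d n m"
    show "\<phi> ` U n \<subseteq> U m"
    proof
      fix g assume "g \<in> \<phi> ` U n"
      then obtain f where f: "f \<in> U n" "g = \<phi> f" by auto
      have ft: "f \<in> Tens n d" using f unfolding U_def by auto
      have "\<phi> f \<in> Tens m d" using phi ft by (simp add: HomH_def)
      moreover have "app P (\<phi> f) = (\<lambda>x. 0)"
        using hom_good[OF P_good phi ft] f hom_zero[OF phi] unfolding U_def by simp
      ultimately show "g \<in> U m" using f unfolding U_def by simp
    qed
  next
    fix n i assume i: "i \<in> {1..d}"
    show "quot_eigs_in Q q d n (U n) i (plus_eig Q q i)"
      unfolding quot_eigs_in_def
    proof (intro ballI allI impI)
      fix f e assume ft: "f \<in> Tens n d" and h: "f \<notin> U n \<and> (\<lambda>w. Kact Q q n d i f w - e * f w) \<in> U n"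
      define g where "g = app P f"
      have gA: "g \<in> A n" unfolding g_def A_def using P_Tens[OF ft] P_app_idem by simp
      have g0: "g \<noteq> (\<lambda>x. 0)" using h ft unfolding g_def U_def by auto
      have kf: "Kact Q q n d i f = app (K i) f" using Kact_eq[OF ft, of i Q q] i by simp
      have "app P (\<lambda>w. app (K i) f w - e * f w) = (\<lambda>x. 0)" using h kf unfolding U_def by simp
      then have "(\<lambda>w. app P (app (K i) f) w - e * app P f w) = (\<lambda>x. 0)"
        by (simp add: app_diff app_smult)
      then have ev: "app (K i) g = (\<lambda>w. e * g w)"
        unfolding g_def using P_app_K[of i f] i by (simp add: fun_eq_iff)
      obtain Pp where Pp: "splits (Rset q {inverse Q} i) Pp" "Zv (A n) {\<lambda>x. 0} (peval Pp (K i))"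
        using jm[OF Ast stable_zero base splits_Pl[of "[inverse Q]" "{inverse Q}"], of i] i by auto
      have "e \<in> Rset q {inverse Q} i" by (rule eig_root[OF Pp(2) Pp(1) gA g0 ev])
      then show "e \<in> plus_eig Q q i" by (simp add: plus_eig_R)
    qed
  qed
  have mini: "\<forall>U'. plus_prop Q q d U' \<longrightarrow> (\<forall>n. U n \<subseteq> U' n)"
  proof (intro allI impI subsetI)
    fix U' n f assume pp': "plus_prop Q q d U'" and f: "f \<in> U n"
    have sm: "submodule Q q d n (U' n)" using pp' by (simp add: plus_prop_def subfunctor_def)
    have st: "stable (U' n)" by (rule submodule_stable[OF sm])
    have ft: "f \<in> Tens n d" using f unfolding U_def by auto
    have hi: "\<forall>i\<in>{1..d}. \<forall>v\<in>Tens n d. app (1 - pi i) v \<in> U' n"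
    proof (intro ballI)
      fix i and v :: "int list \<Rightarrow> 'k" assume i: "i \<in> {1..d}" and v: "v \<in> Tens n d"
      have d1: "1 \<le> d" using i by simp
      have eig1: "quot_eigs_in Q q d n (U' n) 1 (plus_eig Q q 1)" using pp' d1 by (simp add: plus_prop_def)
      have base': "Zv (Tens n d) (U' n) (peval (Pl [inverse Q]) (T 0))"
        unfolding Zv_def PlQ
      proof
        fix u :: "int list \<Rightarrow> 'k" assume u: "u \<in> Tens n d"
        define w where "w = app (T 0 - sc (inverse Q)) u"
        have gT: "T 0 - sc (inverse Q) \<in> goodA" using d1 by (intro good_minus goodA.intros) auto
        have wt: "w \<in> Tens n d" unfolding w_def by (rule good_app[OF gT Tens_stable u])
        have "(\<lambda>x. Kact Q q n d 1 w x - (- Q) * w x) = app (T 0 + sc Q) w"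
          using Kact_eq[OF wt, of 1 Q q] d1 by (simp add: app_plus app_sc)
        also have "\<dots> = (\<lambda>x. 0)" using quad_vec(1)[of u] unfolding w_def .
        finally have k: "(\<lambda>x. Kact Q q n d 1 w x - (- Q) * w x) \<in> U' n"
          using st by (simp add: stable_def)
        have "- Q \<notin> plus_eig Q q 1"
          using F2 Rset_mono[of 1 d q "{inverse Q}"] d1 by (auto simp: plus_eig_R)
        then have "w \<in> U' n" using eig1 wt k unfolding quot_eigs_in_def by blast
        then show "app (T 0 - sc (inverse Q)) u \<in> U' n" unfolding w_def .
      qed
      obtain Pp where Pp: "splits (Rset q {inverse Q} i) Pp" "Zv (Tens n d) (U' n) (peval Pp (K i))"
        using jm[OF Tens_stable st base' splits_Pl[of "[inverse Q]" "{inverse Q}"], of i] i by auto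
      obtain \<kappa> fs where k: "\<kappa> \<noteq> 0" "set fs \<subseteq> Rset q {inverse Q} i" "Pp = smult \<kappa> (Pl fs)"
        using Pp(1) by (auto simp: splits_def)
      have Zf: "Zv (Tens n d) (U' n) (peval (Pl fs) (K i))"
        using Z_unsc[OF st k(1)] Pp(2) k(3) by (simp add: peval_smult)
      have fsE: "set fs \<subseteq> E" using k(2) Rset_mono[of i d q "{inverse Q}"] i E by (auto simp: plus_eig_R)
      show "app (1 - pi i) v \<in> U' n" by (rule V3[OF i Tens_stable st fsE Zf v])
    qed
    have "app (1 - P) f \<in> U' n" by (rule Pm_tele[OF Tens_stable st hi _ ft]) simp
    moreover have "app (1 - P) f = f" using f unfolding U_def by (simp add: app_minus app_one)
    ultimately show "f \<in> U' n" by simp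
  qed
  have "summand_quot Q q d U"
    unfolding summand_quot_def using natidem unfolding U_def by blast
  then show ?thesis using pp mini unfolding is_tensor_plus_kernel_def by blast
qed

end

theorem proposition7p6:
  fixes Q q :: "'k::field" and d :: nat
  assumes "Q \<noteq> 0" and "q \<noteq> 0" and "f_d d Q q \<noteq> 0"
  shows "(\<exists>U. is_tensor_plus_kernel Q q d U \<and> summand_quot Q q d U) \<and>
         (\<exists>S. is_tensor_minus Q q d S \<and> summand_sub Q q d S)"
proof -
  have hk: "hk Q q" using assms by (simp add: hk_def)
  obtain rs where rs: "\<forall>i\<in>{1..d}. peval (Pl rs) (Kop Q q d i) = 0"
    using hk.global_R[OF hk, of d] by blast
  note F = fd_facts[OF assms]
  have cop1: "cop (Pl (filter (\<lambda>x. x \<notin> plus_eig Q q d) rs)) (Pl (filter (\<lambda>x. x \<in> plus_eig Q q d) rs))"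
    by (rule cop_Pl) auto
  then obtain a1 b1 where ab1: "a1 * Pl (filter (\<lambda>x. x \<notin> plus_eig Q q d) rs) + b1 * Pl (filter (\<lambda>x. x \<in> plus_eig Q q d) rs) = 1"
    by (auto simp: cop_def)
  have cop2: "cop (Pl (filter (\<lambda>x. x \<notin> minus_eig Q q d) rs)) (Pl (filter (\<lambda>x. x \<in> minus_eig Q q d) rs))"
    by (rule cop_Pl) auto
  then obtain a2 b2 where ab2: "a2 * Pl (filter (\<lambda>x. x \<notin> minus_eig Q q d) rs) + b2 * Pl (filter (\<lambda>x. x \<in> minus_eig Q q d) rs) = 1"
    by (auto simp: cop_def)
  have p1: "proj Q q d rs (plus_eig Q q d) a1 b1"
    unfolding proj_def proj_axioms_def using hk rs ab1 by simp
  have p2: "proj Q q d rs (minus_eig Q q d) a2 b2"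
    unfolding proj_def proj_axioms_def using hk rs ab2 by simp
  show ?thesis
    using proj.plus_part[OF p1 refl F(2)] proj.minus_part[OF p2 refl F(1)] by blast
qed

end
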